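(* Let $(H,B_1,B_2)$ be a Rota-Baxter system of Hopf algebras with descendent operation $\circ$ and cocycle $\sigma$, and let $H_1=\operatorname{Im}(\sigma)$. Define $T:H_1\to H_1$ by $T(a)=S(B_1(a_1))B_2(a_2)$ for $a\in H_1$. Then $H_{B_1,B_2}=(H_1,\circ_1,1,\Delta_1,\epsilon_1,T)$ is a cocommutative Hopf algebra, where $\circ_1,\Delta_1,\epsilon_1$ denote the restrictions of $\circ,\Delta,\epsilon$ to $H_1$.
   Context: $\mathbb{F}$ is a field of characteristic $0$; all vector spaces, algebras, coalgebras, Hopf algebras are over $\mathbb{F}$. Sweedler notation $\Delta(a)=a_1\otimes a_2$ (iterated: $a_1\otimes a_2\otimes a_3$, etc.) is used. A coalgebra homomorphism $f$ satisfies $\Delta(f(a))=f(a_1)\otimes f(a_2)$ and $\epsilon(f(a))=\epsilon(a)$. A Rota-Baxter system of Hopf algebras is a triple $(H,B_1,B_2)$ where $(H,\cdot,1,\Delta,\epsilon,S)$ is a cocommutative Hopf algebra and $B_1,B_2:H\to H$ are coalgebra homomorphisms with $B_1(1)=B_2(1)=1$ such that for all $a,b\in H$: $B_1(a)B_1(b)=B_1(B_1(a_1)\,b\,S(B_2(a_2)))$ and $B_2(a)B_2(b)=B_2(B_1(a_1)\,b\,S(B_2(a_2)))$. Its descendent operation is $a\circ b=B_1(a_1)\,b\,S(B_2(a_2))$ and its cocycle is $\sigma(a)=B_1(a_1)S(B_2(a_2))$, $a,b\in H$. *)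

theory Defs
  imports Complex_Main
begin

text \<open>
  Elements of tensor powers A (x) A and A (x) A (x) A of a subspace A are represented
  by finite lists of pairs / triples (the formal sums  sum_i x_i (x) y_i), and two such
  representations denote the same tensor iff every bilinear (trilinear) form on A takes
  the same value on them (the algebraic dual of A (x) A is the space of bilinear forms
  on A, and the dual of a vector space separates points).
\<close>

definition subspace_on :: "('k::field \<Rightarrow> 'h::ab_group_add \<Rightarrow> 'h) \<Rightarrow> 'h set \<Rightarrow> bool" where
  "subspace_on scale A \<longleftrightarrow> 0 \<in> A \<and> (\<forall>x\<in>A. \<forall>y\<in>A. x + y \<in> A) \<and> (\<forall>c. \<forall>x\<in>A. scale c x \<in> A)"

definition linear_map_on :: "('k::field \<Rightarrow> 'h::ab_group_add \<Rightarrow> 'h) \<Rightarrow> 'h set \<Rightarrow> ('h \<Rightarrow> 'h) \<Rightarrow> bool" where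
  "linear_map_on scale A f \<longleftrightarrow> (\<forall>x\<in>A. f x \<in> A) \<and>
     (\<forall>x\<in>A. \<forall>y\<in>A. f (x + y) = f x + f y) \<and> (\<forall>c. \<forall>x\<in>A. f (scale c x) = scale c (f x))"

definition linear_functional_on :: "('k::field \<Rightarrow> 'h::ab_group_add \<Rightarrow> 'h) \<Rightarrow> 'h set \<Rightarrow> ('h \<Rightarrow> 'k) \<Rightarrow> bool" where
  "linear_functional_on scale A f \<longleftrightarrow>
     (\<forall>x\<in>A. \<forall>y\<in>A. f (x + y) = f x + f y) \<and> (\<forall>c. \<forall>x\<in>A. f (scale c x) = c * f x)"

definition bilinear_form_on :: "('k::field \<Rightarrow> 'h::ab_group_add \<Rightarrow> 'h) \<Rightarrow> 'h set \<Rightarrow> ('h \<Rightarrow> 'h \<Rightarrow> 'k) \<Rightarrow> bool" where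
  "bilinear_form_on scale A \<beta> \<longleftrightarrow>
     (\<forall>y\<in>A. linear_functional_on scale A (\<lambda>x. \<beta> x y)) \<and>
     (\<forall>x\<in>A. linear_functional_on scale A (\<lambda>y. \<beta> x y))"

definition trilinear_form_on :: "('k::field \<Rightarrow> 'h::ab_group_add \<Rightarrow> 'h) \<Rightarrow> 'h set \<Rightarrow> ('h \<Rightarrow> 'h \<Rightarrow> 'h \<Rightarrow> 'k) \<Rightarrow> bool" where
  "trilinear_form_on scale A \<gamma> \<longleftrightarrow>
     (\<forall>y\<in>A. \<forall>z\<in>A. linear_functional_on scale A (\<lambda>x. \<gamma> x y z)) \<and>
     (\<forall>x\<in>A. \<forall>z\<in>A. linear_functional_on scale A (\<lambda>y. \<gamma> x y z)) \<and>
     (\<forall>x\<in>A. \<forall>y\<in>A. linear_functional_on scale A (\<lambda>z. \<gamma> x y z))"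

definition tensor2_eq :: "('k::field \<Rightarrow> 'h::ab_group_add \<Rightarrow> 'h) \<Rightarrow> 'h set \<Rightarrow> ('h \<times> 'h) list \<Rightarrow> ('h \<times> 'h) list \<Rightarrow> bool" where
  "tensor2_eq scale A xs ys \<longleftrightarrow>
     (\<forall>\<beta>. bilinear_form_on scale A \<beta> \<longrightarrow>
        sum_list (map (\<lambda>(x, y). \<beta> x y) xs) = sum_list (map (\<lambda>(x, y). \<beta> x y) ys))"

definition tensor3_eq :: "('k::field \<Rightarrow> 'h::ab_group_add \<Rightarrow> 'h) \<Rightarrow> 'h set \<Rightarrow> ('h \<times> 'h \<times> 'h) list \<Rightarrow> ('h \<times> 'h \<times> 'h) list \<Rightarrow> bool" where
  "tensor3_eq scale A xs ys \<longleftrightarrow>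
     (\<forall>\<gamma>. trilinear_form_on scale A \<gamma> \<longrightarrow>
        sum_list (map (\<lambda>(x, y, z). \<gamma> x y z) xs) = sum_list (map (\<lambda>(x, y, z). \<gamma> x y z) ys))"

definition hopf_algebra_on ::
  "('k::field \<Rightarrow> 'h::ab_group_add \<Rightarrow> 'h) \<Rightarrow> 'h set \<Rightarrow> ('h \<Rightarrow> 'h \<Rightarrow> 'h) \<Rightarrow> 'h \<Rightarrow>
   ('h \<Rightarrow> ('h \<times> 'h) list) \<Rightarrow> ('h \<Rightarrow> 'k) \<Rightarrow> ('h \<Rightarrow> 'h) \<Rightarrow> bool" where
  "hopf_algebra_on scale A mult one Delta eps S \<longleftrightarrow>
     subspace_on scale A \<and>
     \<comment> \<open>unital associative algebra\<close>
     (\<forall>a\<in>A. \<forall>b\<in>A. mult a b \<in> A) \<and> one \<in> A \<and>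
     (\<forall>a\<in>A. \<forall>b\<in>A. \<forall>c\<in>A. mult (a + b) c = mult a c + mult b c \<and> mult a (b + c) = mult a b + mult a c) \<and>
     (\<forall>k. \<forall>a\<in>A. \<forall>b\<in>A. mult (scale k a) b = scale k (mult a b) \<and> mult a (scale k b) = scale k (mult a b)) \<and>
     (\<forall>a\<in>A. \<forall>b\<in>A. \<forall>c\<in>A. mult (mult a b) c = mult a (mult b c)) \<and>
     (\<forall>a\<in>A. mult one a = a \<and> mult a one = a) \<and>
     \<comment> \<open>coassociative counital coalgebra\<close>
     (\<forall>a\<in>A. set (Delta a) \<subseteq> A \<times> A) \<and>
     (\<forall>a\<in>A. \<forall>b\<in>A. tensor2_eq scale A (Delta (a + b)) (Delta a @ Delta b)) \<and>
     (\<forall>k. \<forall>a\<in>A. tensor2_eq scale A (Delta (scale k a)) (map (\<lambda>(x, y). (scale k x, y)) (Delta a))) \<and>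
     (\<forall>a\<in>A. tensor3_eq scale A
        (concat (map (\<lambda>(x, y). map (\<lambda>(u, v). (u, v, y)) (Delta x)) (Delta a)))
        (concat (map (\<lambda>(x, y). map (\<lambda>(u, v). (x, u, v)) (Delta y)) (Delta a)))) \<and>
     linear_functional_on scale A eps \<and>
     (\<forall>a\<in>A. sum_list (map (\<lambda>(x, y). scale (eps x) y) (Delta a)) = a \<and>
             sum_list (map (\<lambda>(x, y). scale (eps y) x) (Delta a)) = a) \<and>
     \<comment> \<open>bialgebra: Delta and eps are algebra homomorphisms\<close>
     (\<forall>a\<in>A. \<forall>b\<in>A. tensor2_eq scale A (Delta (mult a b))
        (concat (map (\<lambda>(x, y). map (\<lambda>(u, v). (mult x u, mult y v)) (Delta b)) (Delta a)))) \<and>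
     tensor2_eq scale A (Delta one) [(one, one)] \<and>
     (\<forall>a\<in>A. \<forall>b\<in>A. eps (mult a b) = eps a * eps b) \<and> eps one = 1 \<and>
     \<comment> \<open>antipode\<close>
     linear_map_on scale A S \<and>
     (\<forall>a\<in>A. sum_list (map (\<lambda>(x, y). mult (S x) y) (Delta a)) = scale (eps a) one \<and>
             sum_list (map (\<lambda>(x, y). mult x (S y)) (Delta a)) = scale (eps a) one)"

definition cocommutative_on ::
  "('k::field \<Rightarrow> 'h::ab_group_add \<Rightarrow> 'h) \<Rightarrow> 'h set \<Rightarrow> ('h \<Rightarrow> ('h \<times> 'h) list) \<Rightarrow> bool" where
  "cocommutative_on scale A Delta \<longleftrightarrow>
     (\<forall>a\<in>A. tensor2_eq scale A (Delta a) (map (\<lambda>(x, y). (y, x)) (Delta a)))"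

definition coalgebra_hom ::
  "('k::field \<Rightarrow> 'h::ab_group_add \<Rightarrow> 'h) \<Rightarrow> ('h \<Rightarrow> ('h \<times> 'h) list) \<Rightarrow> ('h \<Rightarrow> 'k) \<Rightarrow> ('h \<Rightarrow> 'h) \<Rightarrow> bool" where
  "coalgebra_hom scale Delta eps f \<longleftrightarrow>
     linear_map_on scale UNIV f \<and>
     (\<forall>a. tensor2_eq scale UNIV (Delta (f a)) (map (\<lambda>(x, y). (f x, f y)) (Delta a))) \<and>
     (\<forall>a. eps (f a) = eps a)"

definition descendent :: "('h \<Rightarrow> ('h \<times> 'h) list) \<Rightarrow> ('h \<Rightarrow> 'h) \<Rightarrow> ('h \<Rightarrow> 'h) \<Rightarrow> ('h \<Rightarrow> 'h) \<Rightarrow> 'h \<Rightarrow> 'h \<Rightarrow> 'h::ring_1" where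
  "descendent Delta S B1 B2 a b = sum_list (map (\<lambda>(x, y). B1 x * b * S (B2 y)) (Delta a))"

definition cocycle :: "('h \<Rightarrow> ('h \<times> 'h) list) \<Rightarrow> ('h \<Rightarrow> 'h) \<Rightarrow> ('h \<Rightarrow> 'h) \<Rightarrow> ('h \<Rightarrow> 'h) \<Rightarrow> 'h \<Rightarrow> 'h::ring_1" where
  "cocycle Delta S B1 B2 a = sum_list (map (\<lambda>(x, y). B1 x * S (B2 y)) (Delta a))"

definition rbs_T :: "('h \<Rightarrow> ('h \<times> 'h) list) \<Rightarrow> ('h \<Rightarrow> 'h) \<Rightarrow> ('h \<Rightarrow> 'h) \<Rightarrow> ('h \<Rightarrow> 'h) \<Rightarrow> 'h \<Rightarrow> 'h::ring_1" where
  "rbs_T Delta S B1 B2 a = sum_list (map (\<lambda>(x, y). S (B1 x) * B2 y) (Delta a))"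

definition rota_baxter_system ::
  "('k::field_char_0 \<Rightarrow> 'h::ring_1 \<Rightarrow> 'h) \<Rightarrow> ('h \<Rightarrow> ('h \<times> 'h) list) \<Rightarrow> ('h \<Rightarrow> 'k) \<Rightarrow> ('h \<Rightarrow> 'h) \<Rightarrow>
   ('h \<Rightarrow> 'h) \<Rightarrow> ('h \<Rightarrow> 'h) \<Rightarrow> bool" where
  "rota_baxter_system scale Delta eps S B1 B2 \<longleftrightarrow>
     vector_space scale \<and>
     hopf_algebra_on scale UNIV (*) 1 Delta eps S \<and>
     cocommutative_on scale UNIV Delta \<and>
     coalgebra_hom scale Delta eps B1 \<and> coalgebra_hom scale Delta eps B2 \<and>
     B1 1 = 1 \<and> B2 1 = 1 \<and>
     (\<forall>a b. B1 a * B1 b = B1 (descendent Delta S B1 B2 a b)) \<and>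
     (\<forall>a b. B2 a * B2 b = B2 (descendent Delta S B1 B2 a b))"

end

theory Submission
  imports Defs
begin

locale rbs =
  fixes scale :: "'k::field_char_0 \<Rightarrow> 'h::ring_1 \<Rightarrow> 'h"
    and Delta :: "'h \<Rightarrow> ('h \<times> 'h) list" and eps :: "'h \<Rightarrow> 'k"
    and S B1 B2 :: "'h \<Rightarrow> 'h"
  assumes rbs: "rota_baxter_system scale Delta eps S B1 B2"
begin

lemma vs: "vector_space scale" using rbs by (simp add: rota_baxter_system_def)

sublocale vs: vector_space scale by (rule vs)

lemma hopf: "hopf_algebra_on scale UNIV (*) 1 Delta eps S" using rbs by (simp add: rota_baxter_system_def)

lemma scale_mult_left: "scale k a * b = scale k (a * b)" using hopf by (simp add: hopf_algebra_on_def)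
lemma scale_mult_right: "a * scale k b = scale k (a * b)" using hopf by (simp add: hopf_algebra_on_def)

definition linK :: "('h \<Rightarrow> 'k) \<Rightarrow> bool" where
  "linK f \<longleftrightarrow> (\<forall>x y. f (x + y) = f x + f y) \<and> (\<forall>c x. f (scale c x) = c * f x)"

lemma sep: assumes "\<And>\<phi>. linK \<phi> \<Longrightarrow> \<phi> v = 0" shows "v = 0"
proof (rule ccontr)
  assume v: "v \<noteq> 0"
  have ind: "vs.independent {v}" using v by simp
  interpret p: vector_space_pair scale "(*) :: 'k \<Rightarrow> 'k \<Rightarrow> 'k"
    by unfold_locales (auto simp: algebra_simps)
  obtain g where g: "Vector_Spaces.linear scale (*) g" "\<forall>x\<in>vs.extend_basis {v}. g x = (if x = v then 1 else 0)"
    using p.linear_independent_extend[OF vs.independent_extend_basis[OF ind], of "\<lambda>x. if x = v then 1 else 0"] by blast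
  have "v \<in> vs.extend_basis {v}" using vs.extend_basis_superset[OF ind] by auto
  with g(2) have "g v = 1" by auto
  moreover have "linK g" using g(1) unfolding Vector_Spaces.linear_iff linK_def by auto
  ultimately show False using assms[of g] by simp
qed


definition lin :: "('h \<Rightarrow> 'h) \<Rightarrow> bool" where
  "lin f \<longleftrightarrow> (\<forall>x y. f (x + y) = f x + f y) \<and> (\<forall>c x. f (scale c x) = scale c (f x))"

definition bil :: "('h \<Rightarrow> 'h \<Rightarrow> 'h) \<Rightarrow> bool" where
  "bil F \<longleftrightarrow> (\<forall>y. lin (\<lambda>x. F x y)) \<and> (\<forall>x. lin (\<lambda>y. F x y))"

definition tril :: "('h \<Rightarrow> 'h \<Rightarrow> 'h \<Rightarrow> 'h) \<Rightarrow> bool" where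
  "tril G \<longleftrightarrow> (\<forall>y z. lin (\<lambda>x. G x y z)) \<and> (\<forall>x z. lin (\<lambda>y. G x y z)) \<and> (\<forall>x y. lin (\<lambda>z. G x y z))"

definition D :: "'h \<Rightarrow> ('h \<Rightarrow> 'h \<Rightarrow> 'h) \<Rightarrow> 'h" where
  "D a F = sum_list (map (\<lambda>(x, y). F x y) (Delta a))"

lemma bilI: "(\<And>y. lin (\<lambda>x. F x y)) \<Longrightarrow> (\<And>x. lin (\<lambda>y. F x y)) \<Longrightarrow> bil F"
  by (simp add: bil_def)
lemma trilI: "(\<And>y z. lin (\<lambda>x. G x y z)) \<Longrightarrow> (\<And>x z. lin (\<lambda>y. G x y z)) \<Longrightarrow> (\<And>x y. lin (\<lambda>z. G x y z)) \<Longrightarrow> tril G"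
  by (simp add: tril_def)

lemma add_hom_zero: fixes f :: "'a::ab_group_add \<Rightarrow> 'b::ab_group_add"
  assumes "\<forall>x y. f (x + y) = f x + f y" shows "f 0 = 0"
  using assms[rule_format, of 0 0] by simp

lemma add_hom_sum_list: fixes f :: "'a::ab_group_add \<Rightarrow> 'b::ab_group_add"
  assumes "\<forall>x y. f (x + y) = f x + f y" shows "f (sum_list (map g xs)) = sum_list (map (\<lambda>x. f (g x)) xs)"
  using assms add_hom_zero[OF assms] by (induct xs) auto

lemma add_hom_diff: fixes f :: "'a::ab_group_add \<Rightarrow> 'b::ab_group_add"
  assumes "\<forall>x y. f (x + y) = f x + f y" shows "f (a - b) = f a - f b"
  using assms[rule_format, of "a - b" b] by (simp add: algebra_simps)

lemma teq2: assumes "tensor2_eq scale UNIV xs ys" "bil F"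
  shows "sum_list (map (\<lambda>(x, y). F x y) xs) = sum_list (map (\<lambda>(x, y). F x y) ys)"
proof -
  have "sum_list (map (\<lambda>(x, y). F x y) xs) - sum_list (map (\<lambda>(x, y). F x y) ys) = 0"
  proof (rule sep)
    fix \<phi> assume p: "linK \<phi>"
    have a: "\<forall>x y. \<phi> (x + y) = \<phi> x + \<phi> y" using p by (simp add: linK_def)
    have "bilinear_form_on scale UNIV (\<lambda>x y. \<phi> (F x y))"
      using assms(2) p unfolding bilinear_form_on_def linear_functional_on_def bil_def lin_def linK_def
      by auto
    then have "sum_list (map (\<lambda>(x, y). \<phi> (F x y)) xs) = sum_list (map (\<lambda>(x, y). \<phi> (F x y)) ys)"
      using assms(1) unfolding tensor2_eq_def by blast
    then show "\<phi> (sum_list (map (\<lambda>(x, y). F x y) xs) - sum_list (map (\<lambda>(x, y). F x y) ys)) = 0"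
      unfolding add_hom_diff[OF a] add_hom_sum_list[OF a]
      by (simp add: case_prod_beta')
  qed
  then show ?thesis by simp
qed

lemma teq3: assumes "tensor3_eq scale UNIV xs ys" "tril G"
  shows "sum_list (map (\<lambda>(x, y, z). G x y z) xs) = sum_list (map (\<lambda>(x, y, z). G x y z) ys)"
proof -
  have "sum_list (map (\<lambda>(x, y, z). G x y z) xs) - sum_list (map (\<lambda>(x, y, z). G x y z) ys) = 0"
  proof (rule sep)
    fix \<phi> assume p: "linK \<phi>"
    have a: "\<forall>x y. \<phi> (x + y) = \<phi> x + \<phi> y" using p by (simp add: linK_def)
    have "trilinear_form_on scale UNIV (\<lambda>x y z. \<phi> (G x y z))"
      using assms(2) p unfolding trilinear_form_on_def linear_functional_on_def tril_def lin_def linK_def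
      by auto
    then have "sum_list (map (\<lambda>(x, y, z). \<phi> (G x y z)) xs) = sum_list (map (\<lambda>(x, y, z). \<phi> (G x y z)) ys)"
      using assms(1) unfolding tensor3_eq_def by blast
    then show "\<phi> (sum_list (map (\<lambda>(x, y, z). G x y z) xs) - sum_list (map (\<lambda>(x, y, z). G x y z) ys)) = 0"
      unfolding add_hom_diff[OF a] add_hom_sum_list[OF a]
      by (simp add: case_prod_beta')
  qed
  then show ?thesis by simp
qed


lemma sum_list_concat_map: "sum_list (map f (concat xss)) = sum_list (map (\<lambda>xs. sum_list (map f xs)) xss)"
  by (induct xss) auto

lemma scale_sum_list: "scale c (sum_list (map g xs)) = sum_list (map (\<lambda>x. scale c (g x)) xs)"
  by (induct xs) (auto simp: vs.scale_right_distrib)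

lemma cocomm: "cocommutative_on scale UNIV Delta" using rbs by (simp add: rota_baxter_system_def)
lemma homB1: "coalgebra_hom scale Delta eps B1" using rbs by (simp add: rota_baxter_system_def)
lemma homB2: "coalgebra_hom scale Delta eps B2" using rbs by (simp add: rota_baxter_system_def)
lemma B1_one: "B1 1 = 1" using rbs by (simp add: rota_baxter_system_def)
lemma B2_one: "B2 1 = 1" using rbs by (simp add: rota_baxter_system_def)

definition circ :: "'h \<Rightarrow> 'h \<Rightarrow> 'h" where "circ a b = D a (\<lambda>x y. B1 x * b * S (B2 y))"
definition sigma :: "'h \<Rightarrow> 'h" where "sigma a = D a (\<lambda>x y. B1 x * S (B2 y))"
definition T :: "'h \<Rightarrow> 'h" where "T a = D a (\<lambda>x y. S (B1 x) * B2 y)"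

lemma circ_eq: "circ = descendent Delta S B1 B2" by (auto simp: circ_def descendent_def D_def fun_eq_iff)
lemma sigma_eq: "sigma = cocycle Delta S B1 B2" by (auto simp: sigma_def cocycle_def D_def fun_eq_iff)
lemma T_eq: "T = rbs_T Delta S B1 B2" by (auto simp: T_def rbs_T_def D_def fun_eq_iff)

lemma RB1: "B1 a * B1 b = B1 (circ a b)" using rbs by (simp add: rota_baxter_system_def circ_eq)
lemma RB2: "B2 a * B2 b = B2 (circ a b)" using rbs by (simp add: rota_baxter_system_def circ_eq)

lemma lin_S: "lin S" using hopf by (simp add: hopf_algebra_on_def linear_map_on_def lin_def)
lemma lin_B1: "lin B1" using homB1 by (simp add: coalgebra_hom_def linear_map_on_def lin_def)
lemma lin_B2: "lin B2" using homB2 by (simp add: coalgebra_hom_def linear_map_on_def lin_def)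
lemma eps_B1: "eps (B1 a) = eps a" using homB1 by (simp add: coalgebra_hom_def)
lemma eps_B2: "eps (B2 a) = eps a" using homB2 by (simp add: coalgebra_hom_def)
lemma eps_add: "eps (a + b) = eps a + eps b" using hopf by (simp add: hopf_algebra_on_def linear_functional_on_def)
lemma eps_scale: "eps (scale c a) = c * eps a" using hopf by (simp add: hopf_algebra_on_def linear_functional_on_def)
lemma eps_mult: "eps (a * b) = eps a * eps b" using hopf by (simp add: hopf_algebra_on_def)
lemma eps_one: "eps 1 = 1" using hopf by (simp add: hopf_algebra_on_def)

lemma D_add: assumes "bil F" shows "D (a + b) F = D a F + D b F"
proof -
  have "tensor2_eq scale UNIV (Delta (a + b)) (Delta a @ Delta b)" using hopf by (simp add: hopf_algebra_on_def)
  from teq2[OF this assms] show ?thesis by (simp add: D_def)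
qed

lemma D_scale: assumes "bil F" shows "D (scale c a) F = scale c (D a F)"
proof -
  have "tensor2_eq scale UNIV (Delta (scale c a)) (map (\<lambda>(x, y). (scale c x, y)) (Delta a))"
    using hopf by (simp add: hopf_algebra_on_def)
  from teq2[OF this assms] have "D (scale c a) F = sum_list (map (\<lambda>(x, y). F (scale c x) y) (Delta a))"
    by (simp add: D_def case_prod_beta' o_def)
  also have "\<dots> = sum_list (map (\<lambda>(x, y). scale c (F x y)) (Delta a))"
    using assms by (simp add: bil_def lin_def case_prod_beta')
  also have "\<dots> = scale c (D a F)" by (simp add: D_def scale_sum_list case_prod_beta')
  finally show ?thesis .
qed

lemma D_coassoc: assumes "tril G"
  shows "D a (\<lambda>x y. D x (\<lambda>u v. G u v y)) = D a (\<lambda>x y. D y (\<lambda>u v. G x u v))"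
proof -
  have "tensor3_eq scale UNIV
        (concat (map (\<lambda>(x, y). map (\<lambda>(u, v). (u, v, y)) (Delta x)) (Delta a)))
        (concat (map (\<lambda>(x, y). map (\<lambda>(u, v). (x, u, v)) (Delta y)) (Delta a)))"
    using hopf by (simp add: hopf_algebra_on_def)
  from teq3[OF this assms] show ?thesis
    by (simp add: D_def sum_list_concat_map o_def case_prod_beta')
qed

lemma D_cocomm: assumes "bil F" shows "D a F = D a (\<lambda>x y. F y x)"
proof -
  have "tensor2_eq scale UNIV (Delta a) (map (\<lambda>(x, y). (y, x)) (Delta a))"
    using cocomm by (simp add: cocommutative_on_def)
  from teq2[OF this assms] show ?thesis by (simp add: D_def o_def case_prod_beta')
qed

lemma D_counitL: "D a (\<lambda>x y. scale (eps x) y) = a" using hopf by (simp add: hopf_algebra_on_def D_def)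
lemma D_counitR: "D a (\<lambda>x y. scale (eps y) x) = a" using hopf by (simp add: hopf_algebra_on_def D_def)
lemma D_antiL: "D a (\<lambda>x y. S x * y) = scale (eps a) 1" using hopf by (simp add: hopf_algebra_on_def D_def)
lemma D_antiR: "D a (\<lambda>x y. x * S y) = scale (eps a) 1" using hopf by (simp add: hopf_algebra_on_def D_def)

lemma D_mult: assumes "bil F" shows "D (a * b) F = D a (\<lambda>x y. D b (\<lambda>u v. F (x * u) (y * v)))"
proof -
  have "tensor2_eq scale UNIV (Delta (a * b))
        (concat (map (\<lambda>(x, y). map (\<lambda>(u, v). (x * u, y * v)) (Delta b)) (Delta a)))"
    using hopf by (simp add: hopf_algebra_on_def)
  from teq2[OF this assms] show ?thesis
    by (simp add: D_def sum_list_concat_map o_def case_prod_beta')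
qed

lemma D_one: assumes "bil F" shows "D 1 F = F 1 1"
proof -
  have "tensor2_eq scale UNIV (Delta 1) [(1, 1)]" using hopf by (simp add: hopf_algebra_on_def)
  from teq2[OF this assms] show ?thesis by (simp add: D_def)
qed

lemma D_B1: assumes "bil F" shows "D (B1 a) F = D a (\<lambda>x y. F (B1 x) (B1 y))"
proof -
  have "tensor2_eq scale UNIV (Delta (B1 a)) (map (\<lambda>(x, y). (B1 x, B1 y)) (Delta a))"
    using homB1 by (simp add: coalgebra_hom_def)
  from teq2[OF this assms] show ?thesis by (simp add: D_def o_def case_prod_beta')
qed

lemma D_B2: assumes "bil F" shows "D (B2 a) F = D a (\<lambda>x y. F (B2 x) (B2 y))"
proof -
  have "tensor2_eq scale UNIV (Delta (B2 a)) (map (\<lambda>(x, y). (B2 x, B2 y)) (Delta a))"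
    using homB2 by (simp add: coalgebra_hom_def)
  from teq2[OF this assms] show ?thesis by (simp add: D_def o_def case_prod_beta')
qed

lemma sl_swap: fixes G :: "'a \<Rightarrow> 'b \<Rightarrow> 'c::comm_monoid_add" shows "sum_list (map (\<lambda>p. sum_list (map (\<lambda>q. G p q) ys)) xs) = sum_list (map (\<lambda>q. sum_list (map (\<lambda>p. G p q) xs)) ys)"
proof (induct xs)
  case (Cons a xs)
  have "sum_list (map (\<lambda>q. G a q + sum_list (map (\<lambda>p. G p q) xs)) ys) = sum_list (map (G a) ys) + sum_list (map (\<lambda>q. sum_list (map (\<lambda>p. G p q) xs)) ys)"
    using sum_list_addf[of "G a" "\<lambda>q. sum_list (map (\<lambda>p. G p q) xs)" ys] by simp
  with Cons show ?case by simp
qed simp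
lemma D_plusF: "D a (\<lambda>x y. F x y + G x y) = D a F + D a G"
  unfolding D_def by (simp add: sum_list_addf case_prod_beta')
lemma D_scaleF: "D a (\<lambda>x y. scale c (F x y)) = scale c (D a F)"
  unfolding D_def by (simp add: scale_sum_list case_prod_beta')
lemma D_multL: "D a (\<lambda>x y. c * F x y) = c * D a F"
  unfolding D_def by (simp add: sum_list_const_mult case_prod_beta')
lemma D_multR: "D a (\<lambda>x y. F x y * c) = D a F * c"
  unfolding D_def by (simp add: sum_list_mult_const case_prod_beta')
lemma D_zeroF: "D a (\<lambda>x y. 0) = 0"
  unfolding D_def by (simp add: case_prod_beta')
lemma D_linF: assumes "lin f" shows "f (D a F) = D a (\<lambda>x y. f (F x y))"
  using assms unfolding D_def lin_def by (simp add: add_hom_sum_list case_prod_beta')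
lemma D_swap: "D a (\<lambda>x y. D b (\<lambda>u v. G x y u v)) = D b (\<lambda>u v. D a (\<lambda>x y. G x y u v))"
  unfolding D_def case_prod_beta' by (rule sl_swap)


lemma lin_id: "lin (\<lambda>x. x)" by (simp add: lin_def)
lemma lin_zero: "lin (\<lambda>x. 0)" by (simp add: lin_def)
lemma lin_multL: "lin f \<Longrightarrow> lin (\<lambda>x. f x * c)"
  by (simp add: lin_def distrib_right scale_mult_left)
lemma lin_multR: "lin f \<Longrightarrow> lin (\<lambda>x. c * f x)"
  by (simp add: lin_def distrib_left scale_mult_right)
lemma lin_add: "lin f \<Longrightarrow> lin g \<Longrightarrow> lin (\<lambda>x. f x + g x)"
  by (simp add: lin_def vs.scale_right_distrib)
lemma lin_scale: "lin f \<Longrightarrow> lin (\<lambda>x. scale c (f x))"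
  by (simp add: lin_def vs.scale_right_distrib)
lemma lin_scale_eps: "lin f \<Longrightarrow> lin (\<lambda>x. scale (eps (f x)) c)"
  by (simp add: lin_def eps_add eps_scale vs.scale_left_distrib)
lemma lin_compS: "lin f \<Longrightarrow> lin (\<lambda>x. S (f x))"
  using lin_S by (simp add: lin_def)
lemma lin_compB1: "lin f \<Longrightarrow> lin (\<lambda>x. B1 (f x))"
  using lin_B1 by (simp add: lin_def)
lemma lin_compB2: "lin f \<Longrightarrow> lin (\<lambda>x. B2 (f x))"
  using lin_B2 by (simp add: lin_def)
lemma lin_D_arg: "bil F \<Longrightarrow> lin f \<Longrightarrow> lin (\<lambda>x. D (f x) F)"
  by (simp add: lin_def D_add D_scale)
lemma lin_D_fun: "(\<And>u v. lin (\<lambda>x. G x u v)) \<Longrightarrow> lin (\<lambda>x. D a (G x))"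
proof -
  assume a: "\<And>u v. lin (\<lambda>x. G x u v)"
  have "D a (G (x + y)) = D a (G x) + D a (G y)" for x y
  proof -
    have "G (x + y) = (\<lambda>u v. G x u v + G y u v)" using a by (intro ext) (simp add: lin_def)
    then show ?thesis using D_plusF[of a "G x" "G y"] by simp
  qed
  moreover have "D a (G (scale c x)) = scale c (D a (G x))" for c x
  proof -
    have "G (scale c x) = (\<lambda>u v. scale c (G x u v))" using a by (intro ext) (simp add: lin_def)
    then show ?thesis using D_scaleF[of a c "G x"] by simp
  qed
  ultimately show ?thesis by (simp add: lin_def)
qed
lemma lin_bilL: "bil F \<Longrightarrow> lin f \<Longrightarrow> lin (\<lambda>x. F (f x) y)"
  by (simp add: lin_def bil_def)
lemma lin_bilR: "bil F \<Longrightarrow> lin f \<Longrightarrow> lin (\<lambda>x. F y (f x))"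
  by (simp add: lin_def bil_def)

lemmas lin_rules = lin_id lin_zero lin_add lin_scale lin_scale_eps lin_compS lin_compB1 lin_compB2
  lin_D_fun lin_D_arg lin_multL lin_multR bilI trilI


lemma scale_one_inj: "scale c (1::'h) = scale d 1 \<Longrightarrow> c = d"
  by simp

lemma S_one: "S 1 = 1"
proof -
  have "D 1 (\<lambda>x y. x * S y) = 1 * S 1" by (rule D_one) (intro lin_rules)
  then show ?thesis using D_antiR[of 1] by (simp add: eps_one)
qed

lemma lin_scale_eps_id: "lin (\<lambda>z. scale (eps z) (1::'h))"
  by (intro lin_rules)

lemma eps_S: "eps (S a) = eps a"
proof -
  have "scale (eps (S a)) (1::'h) = scale (eps (S (D a (\<lambda>x y. scale (eps y) x)))) 1"
    by (simp add: D_counitR)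
  also have "\<dots> = D a (\<lambda>x y. scale (eps (S (scale (eps y) x))) 1)"
    by (rule D_linF) (intro lin_rules)
  also have "\<dots> = D a (\<lambda>x y. scale (eps (S x) * eps y) 1)"
    using lin_S by (simp add: lin_def eps_scale mult.commute)
  also have "\<dots> = D a (\<lambda>x y. scale (eps (S x * y)) 1)"
    by (simp add: eps_mult)
  also have "\<dots> = scale (eps (D a (\<lambda>x y. S x * y))) 1"
    by (rule D_linF[symmetric]) (intro lin_rules)
  also have "\<dots> = scale (eps a) 1" by (simp add: D_antiL eps_scale eps_one)
  finally show ?thesis by simp
qed

lemma D_counitL_f: "lin f \<Longrightarrow> D a (\<lambda>x y. scale (eps x) (f y)) = f a"
  using D_linF[of f a "\<lambda>x y. scale (eps x) y"] by (simp add: D_counitL lin_def)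
lemma D_counitR_f: "lin f \<Longrightarrow> D a (\<lambda>x y. scale (eps y) (f x)) = f a"
  using D_linF[of f a "\<lambda>x y. scale (eps y) x"] by (simp add: D_counitR lin_def)

lemma conv_unique:
  assumes lf: "lin f" and lg: "lin g" and lh: "lin h"
    and gf: "\<And>a. D a (\<lambda>x y. g x * f y) = scale (eps a) 1"
    and hg: "\<And>a. D a (\<lambda>x y. h x * g y) = scale (eps a) 1"
  shows "f a = h a"
proof -
  have "h a = D a (\<lambda>x y. scale (eps y) (h x))" by (rule D_counitR_f[OF lh, symmetric])
  also have "\<dots> = D a (\<lambda>x y. h x * scale (eps y) 1)" by (simp add: scale_mult_right)
  also have "\<dots> = D a (\<lambda>x y. h x * D y (\<lambda>u v. g u * f v))" by (simp add: gf)
  also have "\<dots> = D a (\<lambda>x y. D y (\<lambda>u v. h x * (g u * f v)))" by (simp add: D_multL)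
  also have "\<dots> = D a (\<lambda>x y. D x (\<lambda>u v. h u * (g v * f y)))"
    by (rule D_coassoc[symmetric]) (intro lin_rules lf lg lh)
  also have "\<dots> = D a (\<lambda>x y. D x (\<lambda>u v. h u * g v) * f y)" by (subst D_multR[symmetric]) (simp add: mult.assoc)
  also have "\<dots> = D a (\<lambda>x y. scale (eps x) (f y))" by (simp add: hg scale_mult_left)
  also have "\<dots> = f a" by (rule D_counitL_f[OF lf])
  finally show ?thesis by simp
qed


lemma D_cong: "(\<And>x y. F x y = G x y) \<Longrightarrow> D a F = D a G"
  by (simp add: D_def case_prod_beta')

lemma coassoc2:
  assumes f1: "\<And>y. lin (\<lambda>x. f x y)" and f2: "\<And>x. lin (\<lambda>y. f x y)"
    and g1: "\<And>y. lin (\<lambda>x. g x y)" and g2: "\<And>x. lin (\<lambda>y. g x y)"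
    and h1: "\<And>y. lin (\<lambda>x. h x y)" and h2: "\<And>x. lin (\<lambda>y. h x y)"
  shows "D a (\<lambda>a1 a'. D b (\<lambda>b1 b'. f a1 b1 * D a' (\<lambda>a2 a3. D b' (\<lambda>b2 b3. g a2 b2 * h a3 b3))))
       = D a (\<lambda>a' a3. D b (\<lambda>b' b3. D a' (\<lambda>a1 a2. D b' (\<lambda>b1 b2. f a1 b1 * g a2 b2)) * h a3 b3))"
proof -
  have "D a (\<lambda>a1 a'. D b (\<lambda>b1 b'. f a1 b1 * D a' (\<lambda>a2 a3. D b' (\<lambda>b2 b3. g a2 b2 * h a3 b3))))
      = D a (\<lambda>a1 a'. D b (\<lambda>b1 b'. D a' (\<lambda>a2 a3. D b' (\<lambda>b2 b3. f a1 b1 * (g a2 b2 * h a3 b3)))))"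
    by (simp add: D_multL)
  also have "\<dots> = D a (\<lambda>a1 a'. D a' (\<lambda>a2 a3. D b (\<lambda>b1 b'. D b' (\<lambda>b2 b3. f a1 b1 * (g a2 b2 * h a3 b3)))))"
    by (rule D_cong, rule D_swap)
  also have "\<dots> = D a (\<lambda>a' a3. D a' (\<lambda>a1 a2. D b (\<lambda>b1 b'. D b' (\<lambda>b2 b3. f a1 b1 * (g a2 b2 * h a3 b3)))))"
    by (rule D_coassoc[symmetric]) (intro lin_rules f1 f2 g1 g2 h1 h2)
  also have "\<dots> = D a (\<lambda>a' a3. D a' (\<lambda>a1 a2. D b (\<lambda>b' b3. D b' (\<lambda>b1 b2. f a1 b1 * (g a2 b2 * h a3 b3)))))"
    by (rule D_cong, rule D_cong, rule D_coassoc[symmetric]) (intro lin_rules f1 f2 g1 g2 h1 h2)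
  also have "\<dots> = D a (\<lambda>a' a3. D b (\<lambda>b' b3. D a' (\<lambda>a1 a2. D b' (\<lambda>b1 b2. f a1 b1 * (g a2 b2 * h a3 b3)))))"
    by (rule D_cong, rule D_swap)
  also have "\<dots> = D a (\<lambda>a' a3. D b (\<lambda>b' b3. D a' (\<lambda>a1 a2. D b' (\<lambda>b1 b2. f a1 b1 * g a2 b2)) * h a3 b3))"
    by (simp only: D_multR[symmetric] mult.assoc)
  finally show ?thesis .
qed

lemma conv2_unique:
  assumes N1: "\<And>y. lin (\<lambda>x. N x y)" and N2: "\<And>x. lin (\<lambda>y. N x y)"
    and m1: "\<And>y. lin (\<lambda>x. m x y)" and m2: "\<And>x. lin (\<lambda>y. m x y)"
    and M1: "\<And>y. lin (\<lambda>x. M x y)" and M2: "\<And>x. lin (\<lambda>y. M x y)"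
    and Nm: "\<And>a b. D a (\<lambda>a1 a2. D b (\<lambda>b1 b2. N a1 b1 * m a2 b2)) = scale (eps a * eps b) 1"
    and mM: "\<And>a b. D a (\<lambda>a1 a2. D b (\<lambda>b1 b2. m a1 b1 * M a2 b2)) = scale (eps a * eps b) 1"
  shows "N a b = M a b"
proof -
  have "N a b = D a (\<lambda>a1 a2. scale (eps a2) (N a1 b))" by (rule D_counitR_f[OF N1, symmetric])
  also have "\<dots> = D a (\<lambda>a1 a2. scale (eps a2) (D b (\<lambda>b1 b2. scale (eps b2) (N a1 b1))))"
    by (simp add: D_counitR_f[OF N2])
  also have "\<dots> = D a (\<lambda>a1 a2. D b (\<lambda>b1 b2. N a1 b1 * scale (eps a2 * eps b2) 1))"
    by (simp add: D_scaleF[symmetric] scale_mult_right mult.commute)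
  also have "\<dots> = D a (\<lambda>a1 a'. D b (\<lambda>b1 b'. N a1 b1 * D a' (\<lambda>a2 a3. D b' (\<lambda>b2 b3. m a2 b2 * M a3 b3))))"
    by (simp add: mM)
  also have "\<dots> = D a (\<lambda>a' a3. D b (\<lambda>b' b3. D a' (\<lambda>a1 a2. D b' (\<lambda>b1 b2. N a1 b1 * m a2 b2)) * M a3 b3))"
    by (rule coassoc2) (fact N1 N2 m1 m2 M1 M2)+
  also have "\<dots> = D a (\<lambda>a' a3. D b (\<lambda>b' b3. scale (eps a') (scale (eps b') (M a3 b3))))"
    by (simp add: Nm scale_mult_left mult.commute)
  also have "\<dots> = D a (\<lambda>a' a3. scale (eps a') (M a3 b))"
    by (rule D_cong) (simp add: D_scaleF D_counitL_f[OF M2] del: vs.scale_scale)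
  also have "\<dots> = M a b" by (rule D_counitL_f[OF M1])
  finally show ?thesis .
qed

lemma S_antimult: "S (a * b) = S b * S a"
proof (rule conv2_unique[where m = "\<lambda>x y. x * y" and N = "\<lambda>x y. S (x * y)" and M = "\<lambda>x y. S y * S x"])
  show "D a (\<lambda>a1 a2. D b (\<lambda>b1 b2. S (a1 * b1) * (a2 * b2))) = scale (eps a * eps b) 1" for a b
  proof -
    have "D a (\<lambda>a1 a2. D b (\<lambda>b1 b2. S (a1 * b1) * (a2 * b2))) = D (a * b) (\<lambda>x y. S x * y)"
      by (rule D_mult[symmetric]) (intro lin_rules)
    then show ?thesis by (simp add: D_antiL eps_mult)
  qed
  show "D a (\<lambda>a1 a2. D b (\<lambda>b1 b2. a1 * b1 * (S b2 * S a2))) = scale (eps a * eps b) 1" for a b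
  proof -
    have "D a (\<lambda>a1 a2. D b (\<lambda>b1 b2. a1 * b1 * (S b2 * S a2))) = D a (\<lambda>a1 a2. a1 * D b (\<lambda>b1 b2. b1 * S b2) * S a2)"
      by (simp add: D_multL D_multR[symmetric] mult.assoc)
    also have "\<dots> = D a (\<lambda>a1 a2. scale (eps b) (a1 * S a2))"
      by (simp add: D_antiR scale_mult_left scale_mult_right)
    also have "\<dots> = scale (eps a * eps b) 1"
      by (simp add: D_scaleF D_antiR mult.commute)
    finally show ?thesis .
  qed
qed (intro lin_rules)+

lemma S_S: "S (S a) = a"
proof -
  have "(\<lambda>x. S (S x)) a = (\<lambda>x. x) a"
  proof (rule conv_unique[where g = S])
    show "D a (\<lambda>x y. S x * S (S y)) = scale (eps a) 1" for a
    proof -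
      have "D a (\<lambda>x y. S x * S (S y)) = D a (\<lambda>x y. S (S y * x))" by (simp add: S_antimult)
      also have "\<dots> = S (D a (\<lambda>x y. S y * x))" by (rule D_linF[symmetric]) (rule lin_S)
      also have "\<dots> = S (D a (\<lambda>x y. S x * y))" by (subst D_cocomm) (intro lin_rules, simp)
      also have "\<dots> = scale (eps a) 1" using lin_S by (simp add: D_antiL lin_def S_one)
      finally show ?thesis .
    qed
    show "D a (\<lambda>x y. x * S y) = scale (eps a) 1" for a by (rule D_antiR)
  qed (intro lin_rules)+
  then show ?thesis by simp
qed


lemma E1: assumes G: "bil G"
  shows "D a (\<lambda>p q. D p (\<lambda>p1 p2. D q (\<lambda>q1 q2. G (p1 * S q2) (p2 * S q1)))) = scale (eps a) (G 1 1)"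
proof -
  note GL = lin_bilL[OF G] and GR = lin_bilR[OF G]
  have "D a (\<lambda>p q. D p (\<lambda>p1 p2. D q (\<lambda>q1 q2. G (p1 * S q2) (p2 * S q1))))
      = D a (\<lambda>p1 r. D r (\<lambda>p2 q. D q (\<lambda>q1 q2. G (p1 * S q2) (p2 * S q1))))"
    by (rule D_coassoc) (intro lin_rules GL GR)
  also have "\<dots> = D a (\<lambda>p1 r. D r (\<lambda>m q2. D m (\<lambda>p2 q1. G (p1 * S q2) (p2 * S q1))))"
    by (rule D_cong, rule D_coassoc[symmetric]) (intro lin_rules GL GR)
  also have "\<dots> = D a (\<lambda>p1 r. D r (\<lambda>m q2. G (p1 * S q2) (D m (\<lambda>p2 q1. p2 * S q1))))"
    by (rule D_cong, rule D_cong, rule D_linF[symmetric]) (intro lin_rules GL GR)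
  also have "\<dots> = D a (\<lambda>p1 r. D r (\<lambda>m q2. scale (eps m) (G (p1 * S q2) 1)))"
    using G by (simp add: D_antiR bil_def lin_def)
  also have "\<dots> = D a (\<lambda>p1 r. G (p1 * S r) 1)"
    by (rule D_cong, rule D_counitL_f) (intro lin_rules GL GR)
  also have "\<dots> = G (D a (\<lambda>p1 r. p1 * S r)) 1"
    by (rule D_linF[symmetric]) (intro lin_rules GL GR)
  also have "\<dots> = scale (eps a) (G 1 1)"
    using G by (simp add: D_antiR bil_def lin_def)
  finally show ?thesis .
qed

lemma D_S0: assumes F: "bil F" shows "D (S a) F = D a (\<lambda>x y. F (S y) (S x))"
proof -
  note FL = lin_bilL[OF F] and FR = lin_bilR[OF F]
  have "D (S a) F = D (S (D a (\<lambda>a1 a2. scale (eps a2) a1))) F" by (simp add: D_counitR)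
  also have "\<dots> = D a (\<lambda>a1 a2. D (S (scale (eps a2) a1)) F)"
    by (rule D_linF) (intro lin_rules F)
  also have "\<dots> = D a (\<lambda>a1 a2. D (S a1) (\<lambda>x y. scale (eps a2) (F x y)))"
    using lin_S F by (simp add: lin_def D_scale D_scaleF)
  also have "\<dots> = D a (\<lambda>a1 a2. D (S a1) (\<lambda>x y. D a2 (\<lambda>p q. D p (\<lambda>p1 p2. D q (\<lambda>q1 q2. F (x * (p1 * S q2)) (y * (p2 * S q1)))))))"
  proof (rule D_cong, rule D_cong)
    fix a1 a2 x y
    have "bil (\<lambda>u v. F (x * u) (y * v))" by (intro lin_rules FL FR)
    from E1[OF this, of a2] show "scale (eps a2) (F x y) = D a2 (\<lambda>p q. D p (\<lambda>p1 p2. D q (\<lambda>q1 q2. F (x * (p1 * S q2)) (y * (p2 * S q1)))))"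
      by simp
  qed
  also have "\<dots> = D a (\<lambda>a1 a2. D a2 (\<lambda>p q. D (S a1) (\<lambda>x y. D p (\<lambda>p1 p2. D q (\<lambda>q1 q2. F (x * (p1 * S q2)) (y * (p2 * S q1)))))))"
    by (rule D_cong, rule D_swap)
  also have "\<dots> = D a (\<lambda>a' q. D a' (\<lambda>a1 p. D (S a1) (\<lambda>x y. D p (\<lambda>p1 p2. D q (\<lambda>q1 q2. F (x * (p1 * S q2)) (y * (p2 * S q1)))))))"
    by (rule D_coassoc[symmetric]) (intro lin_rules FL FR)
  also have "\<dots> = D a (\<lambda>a' q. D a' (\<lambda>a1 p. D (S a1) (\<lambda>x y. D p (\<lambda>p1 p2. (\<lambda>u v. D q (\<lambda>q1 q2. F (u * S q2) (v * S q1))) (x * p1) (y * p2)))))"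
    by (simp add: mult.assoc)
  also have "\<dots> = D a (\<lambda>a' q. D a' (\<lambda>a1 p. D (S a1 * p) (\<lambda>u v. D q (\<lambda>q1 q2. F (u * S q2) (v * S q1)))))"
    by (rule D_cong, rule D_cong, rule D_mult[symmetric]) (intro lin_rules FL FR)
  also have "\<dots> = D a (\<lambda>a' q. D (D a' (\<lambda>a1 p. S a1 * p)) (\<lambda>u v. D q (\<lambda>q1 q2. F (u * S q2) (v * S q1))))"
    by (rule D_cong, rule D_linF[symmetric]) (intro lin_rules FL FR)
  also have "\<dots> = D a (\<lambda>a' q. scale (eps a') (D q (\<lambda>q1 q2. F (1 * S q2) (1 * S q1))))"
  proof (rule D_cong)
    fix a' q
    have b: "bil (\<lambda>u v. D q (\<lambda>q1 q2. F (u * S q2) (v * S q1)))" by (intro lin_rules FL FR)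
    show "D (D a' (\<lambda>a1 p. S a1 * p)) (\<lambda>u v. D q (\<lambda>q1 q2. F (u * S q2) (v * S q1))) =
          scale (eps a') (D q (\<lambda>q1 q2. F (1 * S q2) (1 * S q1)))"
      unfolding D_antiL D_scale[OF b] D_one[OF b] ..
  qed
  also have "\<dots> = D a (\<lambda>x y. F (S y) (S x))"
    by simp (rule D_counitL_f, intro lin_rules FL FR)
  finally show ?thesis .
qed

lemma D_S: assumes F: "bil F" shows "D (S a) F = D a (\<lambda>x y. F (S x) (S y))"
proof -
  note FL = lin_bilL[OF F] and FR = lin_bilR[OF F]
  show ?thesis unfolding D_S0[OF F] by (rule D_cocomm[symmetric]) (intro lin_rules FL FR)
qed


lemma mid_swap:
  assumes k1: "\<And>b c d. lin (\<lambda>a. K a b c d)" and k2: "\<And>a c d. lin (\<lambda>b. K a b c d)"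
    and k3: "\<And>a b d. lin (\<lambda>c. K a b c d)" and k4: "\<And>a b c. lin (\<lambda>d. K a b c d)"
  shows "D a (\<lambda>x y. D x (\<lambda>x1 x2. D y (\<lambda>y1 y2. K x1 x2 y1 y2)))
       = D a (\<lambda>x y. D x (\<lambda>x1 x2. D y (\<lambda>y1 y2. K x1 y1 x2 y2)))"
proof -
  have "D a (\<lambda>x y. D x (\<lambda>x1 x2. D y (\<lambda>y1 y2. K x1 x2 y1 y2)))
      = D a (\<lambda>x1 r. D r (\<lambda>x2 y. D y (\<lambda>y1 y2. K x1 x2 y1 y2)))"
    by (rule D_coassoc) (intro lin_rules k1 k2 k3 k4)
  also have "\<dots> = D a (\<lambda>x1 r. D r (\<lambda>m y2. D m (\<lambda>x2 y1. K x1 x2 y1 y2)))"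
    by (rule D_cong, rule D_coassoc[symmetric]) (intro lin_rules k1 k2 k3 k4)
  also have "\<dots> = D a (\<lambda>x1 r. D r (\<lambda>m y2. D m (\<lambda>p q. K x1 q p y2)))"
    by (rule D_cong, rule D_cong, rule D_cocomm) (intro lin_rules k1 k2 k3 k4)
  also have "\<dots> = D a (\<lambda>x1 r. D r (\<lambda>p y. D y (\<lambda>q y2. K x1 q p y2)))"
    by (rule D_cong, rule D_coassoc) (intro lin_rules k1 k2 k3 k4)
  also have "\<dots> = D a (\<lambda>x y. D x (\<lambda>x1 p. D y (\<lambda>q y2. K x1 q p y2)))"
    by (rule D_coassoc[symmetric]) (intro lin_rules k1 k2 k3 k4)
  finally show ?thesis .
qed

lemma F_DD: assumes F: "bil F"
  shows "F (D x G1) (D y G2) = D x (\<lambda>x1 x2. D y (\<lambda>y1 y2. F (G1 x1 x2) (G2 y1 y2)))"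
proof -
  have "F (D x G1) (D y G2) = D x (\<lambda>x1 x2. F (G1 x1 x2) (D y G2))"
    by (rule D_linF[where f = "\<lambda>z. F z (D y G2)"]) (intro lin_bilL[OF F] lin_id)
  also have "\<dots> = D x (\<lambda>x1 x2. D y (\<lambda>y1 y2. F (G1 x1 x2) (G2 y1 y2)))"
    by (rule D_cong, rule D_linF) (intro lin_bilR[OF F] lin_id)
  finally show ?thesis .
qed

lemma D_prod3: assumes F: "bil F"
  shows "D (B1 x * b * S (B2 y)) F = D x (\<lambda>x1 x2. D y (\<lambda>y1 y2. D b (\<lambda>u v. F (B1 x1 * u * S (B2 y1)) (B1 x2 * v * S (B2 y2)))))"
proof -
  note FL = lin_bilL[OF F] and FR = lin_bilR[OF F]
  have "D (B1 x * b * S (B2 y)) F = D (B1 x * b) (\<lambda>p q. D (S (B2 y)) (\<lambda>r t. F (p * r) (q * t)))"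
    by (rule D_mult) (rule F)
  also have "\<dots> = D (B1 x) (\<lambda>p1 p2. D b (\<lambda>u v. D (S (B2 y)) (\<lambda>r t. F (p1 * u * r) (p2 * v * t))))"
    by (rule D_mult) (intro lin_rules FL FR)
  also have "\<dots> = D x (\<lambda>x1 x2. D b (\<lambda>u v. D (S (B2 y)) (\<lambda>r t. F (B1 x1 * u * r) (B1 x2 * v * t))))"
    by (rule D_B1) (intro lin_rules FL FR)
  also have "\<dots> = D x (\<lambda>x1 x2. D b (\<lambda>u v. D (B2 y) (\<lambda>r t. F (B1 x1 * u * S r) (B1 x2 * v * S t))))"
    by (rule D_cong, rule D_cong, rule D_S) (intro lin_rules FL FR)
  also have "\<dots> = D x (\<lambda>x1 x2. D b (\<lambda>u v. D y (\<lambda>y1 y2. F (B1 x1 * u * S (B2 y1)) (B1 x2 * v * S (B2 y2)))))"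
    by (rule D_cong, rule D_cong, rule D_B2) (intro lin_rules FL FR)
  also have "\<dots> = D x (\<lambda>x1 x2. D y (\<lambda>y1 y2. D b (\<lambda>u v. F (B1 x1 * u * S (B2 y1)) (B1 x2 * v * S (B2 y2)))))"
    by (rule D_cong, rule D_swap)
  finally show ?thesis .
qed

lemma D_circ: assumes F: "bil F"
  shows "D (circ a b) F = D a (\<lambda>x y. D b (\<lambda>u v. F (circ x u) (circ y v)))"
proof -
  note FL = lin_bilL[OF F] and FR = lin_bilR[OF F]
  have "D (circ a b) F = D a (\<lambda>x y. D (B1 x * b * S (B2 y)) F)"
    unfolding circ_def by (rule D_linF) (intro lin_rules F)
  also have "\<dots> = D a (\<lambda>x y. D x (\<lambda>x1 x2. D y (\<lambda>y1 y2. D b (\<lambda>u v. F (B1 x1 * u * S (B2 y1)) (B1 x2 * v * S (B2 y2))))))"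
    by (rule D_cong, rule D_prod3[OF F])
  also have "\<dots> = D a (\<lambda>x y. D x (\<lambda>x1 x2. D y (\<lambda>y1 y2. D b (\<lambda>u v. F (B1 x1 * u * S (B2 x2)) (B1 y1 * v * S (B2 y2))))))"
    by (rule mid_swap[where K = "\<lambda>x1 x2 y1 y2. D b (\<lambda>u v. F (B1 x1 * u * S (B2 y1)) (B1 x2 * v * S (B2 y2)))", simplified])
       (intro lin_rules FL FR)+
  also have "\<dots> = D a (\<lambda>x y. D x (\<lambda>x1 x2. D b (\<lambda>u v. D y (\<lambda>y1 y2. F (B1 x1 * u * S (B2 x2)) (B1 y1 * v * S (B2 y2))))))"
    by (rule D_cong, rule D_cong, rule D_swap)
  also have "\<dots> = D a (\<lambda>x y. D b (\<lambda>u v. D x (\<lambda>x1 x2. D y (\<lambda>y1 y2. F (B1 x1 * u * S (B2 x2)) (B1 y1 * v * S (B2 y2))))))"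
    by (rule D_cong, rule D_swap)
  also have "\<dots> = D a (\<lambda>x y. D b (\<lambda>u v. F (circ x u) (circ y v)))"
    unfolding circ_def by (rule D_cong, rule D_cong, rule F_DD[OF F, symmetric])
  finally show ?thesis .
qed


lemma sigma_circ: "sigma a = circ a 1" by (simp add: sigma_def circ_def)

lemma sigma_fun: "sigma = (\<lambda>a. D a (\<lambda>x y. B1 x * S (B2 y)))" by (rule ext) (simp add: sigma_def)
lemma T_fun: "T = (\<lambda>a. D a (\<lambda>x y. S (B1 x) * B2 y))" by (rule ext) (simp add: T_def)

lemma lin_compsigma: "lin f \<Longrightarrow> lin (\<lambda>x. sigma (f x))"
  unfolding sigma_fun by (intro lin_rules)
lemma lin_compT: "lin f \<Longrightarrow> lin (\<lambda>x. T (f x))"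
  unfolding T_fun by (intro lin_rules)
lemma lin_circ1: "lin f \<Longrightarrow> lin (\<lambda>x. circ (f x) b)"
  unfolding circ_def by (intro lin_rules)
lemma lin_circ2: "lin f \<Longrightarrow> lin (\<lambda>x. circ b (f x))"
  unfolding circ_def by (intro lin_rules)

lemmas lin_rules2 = lin_rules lin_compsigma lin_compT lin_circ1 lin_circ2

lemma lin_sigma: "lin sigma" using lin_compsigma[OF lin_id] by simp
lemma lin_T: "lin T" using lin_compT[OF lin_id] by simp

lemma D_sigma: assumes F: "bil F" shows "D (sigma a) F = D a (\<lambda>x y. F (sigma x) (sigma y))"
proof -
  note FL = lin_bilL[OF F] and FR = lin_bilR[OF F]
  have "D (sigma a) F = D a (\<lambda>x y. D 1 (\<lambda>u v. F (circ x u) (circ y v)))"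
    unfolding sigma_circ by (rule D_circ[OF F])
  also have "\<dots> = D a (\<lambda>x y. F (sigma x) (sigma y))"
    by (rule D_cong) (subst D_one, intro lin_rules2 FL FR, simp add: sigma_circ)
  finally show ?thesis .
qed

lemma B1_sigma: "B1 (sigma a) = B1 a" using RB1[of a 1] by (simp add: B1_one sigma_circ)
lemma B2_sigma: "B2 (sigma a) = B2 a" using RB2[of a 1] by (simp add: B2_one sigma_circ)

lemma circ_sigma: "circ (sigma a) y = circ a y"
proof -
  have "circ (sigma a) y = D a (\<lambda>x z. B1 (sigma x) * y * S (B2 (sigma z)))"
    unfolding circ_def by (rule D_sigma) (intro lin_rules)
  then show ?thesis by (simp add: B1_sigma B2_sigma circ_def)
qed

lemma circ_assoc: "circ (circ a b) c = circ a (circ b c)"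
proof -
  have "circ (circ a b) c = D a (\<lambda>x y. D b (\<lambda>u v. B1 (circ x u) * c * S (B2 (circ y v))))"
    unfolding circ_def[of "circ a b"] by (rule D_circ) (intro lin_rules)
  also have "\<dots> = D a (\<lambda>x y. B1 x * D b (\<lambda>u v. B1 u * c * S (B2 v)) * S (B2 y))"
    by (simp add: RB1[symmetric] RB2[symmetric] S_antimult D_multL[symmetric] D_multR[symmetric] mult.assoc)
  also have "\<dots> = circ a (circ b c)" by (simp add: circ_def)
  finally show ?thesis .
qed

lemma sigma_sigma: "sigma (sigma a) = sigma a"
  by (metis circ_sigma sigma_circ)

lemma circ_one_left: "circ 1 x = x"
  unfolding circ_def by (subst D_one) (intro lin_rules, simp add: B1_one B2_one S_one)

lemma sigma_one: "sigma 1 = 1" by (simp add: sigma_circ circ_one_left)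

lemma circ_sigma_sigma: "circ (sigma a) (sigma b) = sigma (circ a b)"
  by (simp only: circ_sigma) (simp only: sigma_circ circ_assoc)

lemma eps_circ: "eps (circ a b) = eps a * eps b"
proof -
  have "scale (eps (circ a b)) (1::'h) = D a (\<lambda>x y. scale (eps (B1 x * b * S (B2 y))) 1)"
    unfolding circ_def by (rule D_linF) (intro lin_rules)
  also have "\<dots> = D a (\<lambda>x y. scale (eps b) (scale (eps x) (scale (eps y) 1)))"
    by (simp add: eps_mult eps_B1 eps_B2 eps_S mult.commute mult.left_commute)
  also have "\<dots> = scale (eps b) (scale (eps a) 1)"
    by (simp add: D_scaleF D_counitL_f lin_scale_eps_id del: vs.scale_scale)
  finally show ?thesis by (simp add: mult.commute)
qed

lemma antiB1: "D x (\<lambda>p q. B1 p * S (B1 q)) = scale (eps x) 1"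
proof -
  have b: "bil (\<lambda>p q. p * S q)" by (intro lin_rules)
  show ?thesis using D_B1[OF b, of x] D_antiR[of "B1 x"] by (simp add: eps_B1)
qed
lemma antiB2: "D x (\<lambda>p q. B2 p * S (B2 q)) = scale (eps x) 1"
proof -
  have b: "bil (\<lambda>p q. p * S q)" by (intro lin_rules)
  show ?thesis using D_B2[OF b, of x] D_antiR[of "B2 x"] by (simp add: eps_B2)
qed
lemma antiB1': "D x (\<lambda>p q. S (B1 p) * B1 q) = scale (eps x) 1"
proof -
  have b: "bil (\<lambda>p q. S p * q)" by (intro lin_rules)
  show ?thesis using D_B1[OF b, of x] D_antiL[of "B1 x"] by (simp add: eps_B1)
qed
lemma antiB2': "D x (\<lambda>p q. S (B2 p) * B2 q) = scale (eps x) 1"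
proof -
  have b: "bil (\<lambda>p q. S p * q)" by (intro lin_rules)
  show ?thesis using D_B2[OF b, of x] D_antiL[of "B2 x"] by (simp add: eps_B2)
qed
lemma antiB2s: "D x (\<lambda>p q. B2 q * S (B2 p)) = scale (eps x) 1"
proof -
  have b: "bil (\<lambda>p q. B2 p * S (B2 q))" by (intro lin_rules)
  show ?thesis using antiB2[of x] D_cocomm[OF b, of x] by simp
qed
lemma antiB2s': "D x (\<lambda>p q. S (B2 q) * B2 p) = scale (eps x) 1"
proof -
  have b: "bil (\<lambda>p q. S (B2 p) * B2 q)" by (intro lin_rules)
  show ?thesis using antiB2'[of x] D_cocomm[OF b, of x] by simp
qed

lemma eps_eps: "D a (\<lambda>x y. scale (eps x) 1 * scale (eps y) 1) = scale (eps a) 1"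
  by (simp add: scale_mult_left D_counitL_f lin_scale_eps_id del: vs.scale_scale)


lemma D_prod_sep: "D x (\<lambda>x1 x2. D y (\<lambda>y1 y2. P x1 x2 * Q y1 y2)) = D x P * D y Q"
  by (simp add: D_multL D_multR)

lemma CT: "D a (\<lambda>x y. circ x (T y)) = scale (eps a) 1"
proof -
  have "D a (\<lambda>x y. circ x (T y)) = D a (\<lambda>x y. D x (\<lambda>x1 x2. D y (\<lambda>y1 y2. B1 x1 * (S (B1 y1) * B2 y2) * S (B2 x2))))"
    by (rule D_cong) (simp add: circ_def T_def D_multL D_multR)
  also have "\<dots> = D a (\<lambda>x y. D x (\<lambda>x1 x2. D y (\<lambda>y1 y2. B1 x1 * (S (B1 x2) * B2 y2) * S (B2 y1))))"
    by (rule mid_swap[where K = "\<lambda>x1 x2 y1 y2. B1 x1 * (S (B1 y1) * B2 y2) * S (B2 x2)", simplified])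
       (intro lin_rules)+
  also have "\<dots> = D a (\<lambda>x y. D x (\<lambda>x1 x2. B1 x1 * S (B1 x2)) * D y (\<lambda>y1 y2. B2 y2 * S (B2 y1)))"
    by (rule D_cong) (simp only: D_prod_sep[symmetric] mult.assoc)
  also have "\<dots> = scale (eps a) 1" by (simp add: antiB1 antiB2s eps_eps)
  finally show ?thesis .
qed

lemma B1_T: "B1 (T a) = S (B1 a)"
proof -
  have "(\<lambda>a. B1 (T a)) a = (\<lambda>a. S (B1 a)) a"
  proof (rule conv_unique[where g = B1 and f = "\<lambda>a. B1 (T a)" and h = "\<lambda>a. S (B1 a)"])
    show "D a (\<lambda>x y. B1 x * B1 (T y)) = scale (eps a) 1" for a
    proof -
      have "D a (\<lambda>x y. B1 x * B1 (T y)) = B1 (D a (\<lambda>x y. circ x (T y)))"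
        by (simp add: RB1 D_linF[OF lin_B1])
      also have "\<dots> = scale (eps a) 1" using lin_B1 by (simp add: CT lin_def B1_one)
      finally show ?thesis .
    qed
    show "D a (\<lambda>x y. S (B1 x) * B1 y) = scale (eps a) 1" for a by (rule antiB1')
  qed (intro lin_rules2)+
  then show ?thesis by simp
qed

lemma B2_T: "B2 (T a) = S (B2 a)"
proof -
  have "(\<lambda>a. B2 (T a)) a = (\<lambda>a. S (B2 a)) a"
  proof (rule conv_unique[where g = B2 and f = "\<lambda>a. B2 (T a)" and h = "\<lambda>a. S (B2 a)"])
    show "D a (\<lambda>x y. B2 x * B2 (T y)) = scale (eps a) 1" for a
    proof -
      have "D a (\<lambda>x y. B2 x * B2 (T y)) = B2 (D a (\<lambda>x y. circ x (T y)))"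
        by (simp add: RB2 D_linF[OF lin_B2])
      also have "\<dots> = scale (eps a) 1" using lin_B2 by (simp add: CT lin_def B2_one)
      finally show ?thesis .
    qed
    show "D a (\<lambda>x y. S (B2 x) * B2 y) = scale (eps a) 1" for a by (rule antiB2')
  qed (intro lin_rules2)+
  then show ?thesis by simp
qed

lemma D_T: assumes F: "bil F" shows "D (T a) F = D a (\<lambda>x y. F (T x) (T y))"
proof -
  note FL = lin_bilL[OF F] and FR = lin_bilR[OF F]
  have "D (T a) F = D a (\<lambda>x y. D (S (B1 x) * B2 y) F)"
    unfolding T_def by (rule D_linF) (intro lin_rules F)
  also have "\<dots> = D a (\<lambda>x y. D x (\<lambda>x1 x2. D y (\<lambda>y1 y2. F (S (B1 x1) * B2 y1) (S (B1 x2) * B2 y2))))"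
  proof (rule D_cong)
    fix x y
    have "D (S (B1 x) * B2 y) F = D (S (B1 x)) (\<lambda>p q. D (B2 y) (\<lambda>r t. F (p * r) (q * t)))"
      by (rule D_mult) (rule F)
    also have "\<dots> = D (B1 x) (\<lambda>p q. D (B2 y) (\<lambda>r t. F (S p * r) (S q * t)))"
      by (rule D_S) (intro lin_rules FL FR)
    also have "\<dots> = D x (\<lambda>x1 x2. D (B2 y) (\<lambda>r t. F (S (B1 x1) * r) (S (B1 x2) * t)))"
      by (rule D_B1) (intro lin_rules FL FR)
    also have "\<dots> = D x (\<lambda>x1 x2. D y (\<lambda>y1 y2. F (S (B1 x1) * B2 y1) (S (B1 x2) * B2 y2)))"
      by (rule D_cong, rule D_B2) (intro lin_rules FL FR)
    finally show "D (S (B1 x) * B2 y) F = D x (\<lambda>x1 x2. D y (\<lambda>y1 y2. F (S (B1 x1) * B2 y1) (S (B1 x2) * B2 y2)))" .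
  qed
  also have "\<dots> = D a (\<lambda>x y. D x (\<lambda>x1 x2. D y (\<lambda>y1 y2. F (S (B1 x1) * B2 x2) (S (B1 y1) * B2 y2))))"
    by (rule mid_swap[where K = "\<lambda>x1 x2 y1 y2. F (S (B1 x1) * B2 y1) (S (B1 x2) * B2 y2)", simplified])
       (intro lin_rules FL FR)+
  also have "\<dots> = D a (\<lambda>x y. F (T x) (T y))"
    unfolding T_def by (rule D_cong, rule F_DD[OF F, symmetric])
  finally show ?thesis .
qed

lemma sigma_T: "sigma (T a) = T a"
proof -
  have "sigma (T a) = D a (\<lambda>x y. B1 (T x) * S (B2 (T y)))"
    unfolding sigma_def by (rule D_T) (intro lin_rules)
  then show ?thesis by (simp only: B1_T B2_T S_S) (simp add: T_def)
qed

lemma T_sigma: "T (sigma a) = T a"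
proof -
  have "T (sigma a) = D a (\<lambda>x y. S (B1 (sigma x)) * B2 (sigma y))"
    unfolding T_def by (rule D_sigma) (intro lin_rules)
  then show ?thesis by (simp add: B1_sigma B2_sigma T_def)
qed

lemma circ_T: "circ (T u) w = D u (\<lambda>p q. S (B1 p) * w * B2 q)"
proof -
  have "circ (T u) w = D u (\<lambda>p q. B1 (T p) * w * S (B2 (T q)))"
    unfolding circ_def by (rule D_T) (intro lin_rules)
  then show ?thesis by (simp add: B1_T B2_T S_S)
qed

lemma TC: "D c (\<lambda>u v. circ (T u) (sigma v)) = scale (eps c) 1"
proof -
  have "D c (\<lambda>u v. circ (T u) (sigma v)) = D c (\<lambda>u v. D u (\<lambda>p q. D v (\<lambda>v1 v2. S (B1 p) * (B1 v1 * S (B2 v2)) * B2 q)))"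
    by (rule D_cong) (simp add: circ_T sigma_def D_multL D_multR)
  also have "\<dots> = D c (\<lambda>x y. D x (\<lambda>x1 x2. D y (\<lambda>y1 y2. S (B1 x1) * (B1 x2 * S (B2 y2)) * B2 y1)))"
    by (rule mid_swap[where K = "\<lambda>p q v1 v2. S (B1 p) * (B1 v1 * S (B2 v2)) * B2 q", simplified])
       (intro lin_rules)+
  also have "\<dots> = D c (\<lambda>x y. D x (\<lambda>x1 x2. S (B1 x1) * B1 x2) * D y (\<lambda>y1 y2. S (B2 y2) * B2 y1))"
    by (rule D_cong) (simp only: D_prod_sep[symmetric] mult.assoc)
  also have "\<dots> = scale (eps c) 1" by (simp add: antiB1' antiB2s' eps_eps)
  finally show ?thesis .
qed


abbreviation H1 where "H1 \<equiv> range sigma"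

lemma H1_iff: "x \<in> H1 \<longleftrightarrow> sigma x = x"
  by (metis rangeE rangeI sigma_sigma)

lemma H1_add: "a \<in> H1 \<Longrightarrow> b \<in> H1 \<Longrightarrow> a + b \<in> H1"
  using lin_sigma by (simp add: H1_iff lin_def)
lemma H1_scale: "a \<in> H1 \<Longrightarrow> scale k a \<in> H1"
  using lin_sigma by (simp add: H1_iff lin_def)
lemma H1_zero: "0 \<in> H1"
  using lin_sigma add_hom_zero[of sigma] by (simp add: H1_iff lin_def)
lemma H1_one: "1 \<in> H1" by (simp add: H1_iff sigma_one)
lemma H1_circ: assumes "a \<in> H1" "b \<in> H1" shows "circ a b \<in> H1"
proof -
  obtain a' b' where "a = sigma a'" "b = sigma b'" using assms by blast
  then have "circ a b = sigma (circ a' b')" by (simp add: circ_sigma_sigma)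
  then show ?thesis by simp
qed
lemma H1_T: "T a \<in> H1" by (simp add: H1_iff sigma_T)

lemma proj_exists: "\<exists>P. lin P \<and> (\<forall>x. P x \<in> H1) \<and> (\<forall>v\<in>H1. P v = v)"
proof -
  interpret p: vector_space_pair scale scale by unfold_locales
  have sub: "vs.subspace H1"
    unfolding vs.subspace_def using H1_zero H1_add H1_scale by blast
  have lid: "Vector_Spaces.linear scale scale id" by (rule vs.linear_id)
  obtain g where g: "g ` UNIV \<subseteq> H1" "Vector_Spaces.linear scale scale g" "\<forall>v\<in>H1. g (id v) = v"
    using p.linear_exists_left_inverse_on[OF lid sub] by auto
  have "lin g" using g(2) unfolding Vector_Spaces.linear_iff lin_def by auto
  with g(1,3) show ?thesis by (intro exI[of _ g]) auto
qed

lemma sum_scale_one: "sum_list (map (\<lambda>(x, y). scale (f x y) (1::'h)) xs) = scale (sum_list (map (\<lambda>(x, y). f x y) xs)) 1"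
  by (induct xs) (auto simp: vs.scale_left_distrib)

lemma sum_scale_one3: "sum_list (map (\<lambda>(x, y, z). scale (f x y z) (1::'h)) xs) = scale (sum_list (map (\<lambda>(x, y, z). f x y z) xs)) 1"
  by (induct xs) (auto simp: vs.scale_left_distrib)

lemma proj2:
  assumes xs: "set xs \<subseteq> H1 \<times> H1" and ys: "set ys \<subseteq> H1 \<times> H1"
    and eq: "\<And>F. bil F \<Longrightarrow> sum_list (map (\<lambda>(x, y). F x y) xs) = sum_list (map (\<lambda>(x, y). F x y) ys)"
  shows "tensor2_eq scale H1 xs ys"
  unfolding tensor2_eq_def
proof (intro allI impI)
  fix \<beta> assume b: "bilinear_form_on scale H1 \<beta>"
  obtain P where P: "lin P" "\<And>x. P x \<in> H1" "\<And>v. v \<in> H1 \<Longrightarrow> P v = v" using proj_exists by blast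
  have Pl: "P (x + y) = P x + P y" "P (scale c x) = scale c (P x)" for x y c using P(1) by (auto simp: lin_def)
  have b1: "\<beta> (x + x') y = \<beta> x y + \<beta> x' y" "\<beta> y (x + x') = \<beta> y x + \<beta> y x'"
    if "x \<in> H1" "x' \<in> H1" "y \<in> H1" for x x' y
    using b that unfolding bilinear_form_on_def linear_functional_on_def by blast+
  have b2: "\<beta> (scale c x) y = c * \<beta> x y" "\<beta> y (scale c x) = c * \<beta> y x"
    if "x \<in> H1" "y \<in> H1" for x y c
    using b that unfolding bilinear_form_on_def linear_functional_on_def by blast+
  have "bil (\<lambda>x y. scale (\<beta> (P x) (P y)) 1)"
    unfolding bil_def lin_def
    by (simp add: Pl b1 b2 P(2) vs.scale_left_distrib)
  from eq[OF this] have "scale (sum_list (map (\<lambda>(x, y). \<beta> (P x) (P y)) xs)) (1::'h) = scale (sum_list (map (\<lambda>(x, y). \<beta> (P x) (P y)) ys)) 1"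
    by (simp add: sum_scale_one)
  then have e: "sum_list (map (\<lambda>(x, y). \<beta> (P x) (P y)) xs) = sum_list (map (\<lambda>(x, y). \<beta> (P x) (P y)) ys)"
    by simp
  have e1: "map (\<lambda>(x, y). \<beta> (P x) (P y)) xs = map (\<lambda>(x, y). \<beta> x y) xs"
    by (rule map_cong[OF refl]) (use xs P(3) in auto)
  have e2: "map (\<lambda>(x, y). \<beta> (P x) (P y)) ys = map (\<lambda>(x, y). \<beta> x y) ys"
    by (rule map_cong[OF refl]) (use ys P(3) in auto)
  show "sum_list (map (\<lambda>(x, y). \<beta> x y) xs) = sum_list (map (\<lambda>(x, y). \<beta> x y) ys)"
    using e unfolding e1 e2 .
qed

lemma proj3:
  assumes xs: "set xs \<subseteq> H1 \<times> H1 \<times> H1" and ys: "set ys \<subseteq> H1 \<times> H1 \<times> H1"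
    and eq: "\<And>G. tril G \<Longrightarrow> sum_list (map (\<lambda>(x, y, z). G x y z) xs) = sum_list (map (\<lambda>(x, y, z). G x y z) ys)"
  shows "tensor3_eq scale H1 xs ys"
  unfolding tensor3_eq_def
proof (intro allI impI)
  fix \<gamma> assume b: "trilinear_form_on scale H1 \<gamma>"
  obtain P where P: "lin P" "\<And>x. P x \<in> H1" "\<And>v. v \<in> H1 \<Longrightarrow> P v = v" using proj_exists by blast
  have Pl: "P (x + y) = P x + P y" "P (scale c x) = scale c (P x)" for x y c using P(1) by (auto simp: lin_def)
  have b1: "\<gamma> (x + x') y z = \<gamma> x y z + \<gamma> x' y z" "\<gamma> y (x + x') z = \<gamma> y x z + \<gamma> y x' z"
     "\<gamma> y z (x + x') = \<gamma> y z x + \<gamma> y z x'"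
    if "x \<in> H1" "x' \<in> H1" "y \<in> H1" "z \<in> H1" for x x' y z
    using b that unfolding trilinear_form_on_def linear_functional_on_def by blast+
  have b2: "\<gamma> (scale c x) y z = c * \<gamma> x y z" "\<gamma> y (scale c x) z = c * \<gamma> y x z"
     "\<gamma> y z (scale c x) = c * \<gamma> y z x"
    if "x \<in> H1" "y \<in> H1" "z \<in> H1" for x y z c
    using b that unfolding trilinear_form_on_def linear_functional_on_def by blast+
  have "tril (\<lambda>x y z. scale (\<gamma> (P x) (P y) (P z)) 1)"
    unfolding tril_def lin_def
    by (simp add: Pl b1 b2 P(2) vs.scale_left_distrib)
  from eq[OF this] have "scale (sum_list (map (\<lambda>(x, y, z). \<gamma> (P x) (P y) (P z)) xs)) (1::'h) = scale (sum_list (map (\<lambda>(x, y, z). \<gamma> (P x) (P y) (P z)) ys)) 1"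
    by (simp add: sum_scale_one3)
  then have e: "sum_list (map (\<lambda>(x, y, z). \<gamma> (P x) (P y) (P z)) xs) = sum_list (map (\<lambda>(x, y, z). \<gamma> (P x) (P y) (P z)) ys)"
    by simp
  have e1: "map (\<lambda>(x, y, z). \<gamma> (P x) (P y) (P z)) xs = map (\<lambda>(x, y, z). \<gamma> x y z) xs"
    by (rule map_cong[OF refl]) (use xs P(3) in auto)
  have e2: "map (\<lambda>(x, y, z). \<gamma> (P x) (P y) (P z)) ys = map (\<lambda>(x, y, z). \<gamma> x y z) ys"
    by (rule map_cong[OF refl]) (use ys P(3) in auto)
  show "sum_list (map (\<lambda>(x, y, z). \<gamma> x y z) xs) = sum_list (map (\<lambda>(x, y, z). \<gamma> x y z) ys)"
    using e unfolding e1 e2 .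
qed


lemma bil_form: assumes "bilinear_form_on scale UNIV \<beta>" shows "bil (\<lambda>x y. scale (\<beta> x y) (1::'h))"
  using assms unfolding bil_def lin_def bilinear_form_on_def linear_functional_on_def
  by (simp add: vs.scale_left_distrib)

lemma first_part: "\<forall>a\<in>H1. \<exists>xs. set xs \<subseteq> H1 \<times> H1 \<and> tensor2_eq scale UNIV xs (Delta a)"
proof
  fix a assume "a \<in> H1"
  then obtain c where a: "a = sigma c" by blast
  let ?xs = "map (\<lambda>(x, y). (sigma x, sigma y)) (Delta c)"
  have "tensor2_eq scale UNIV ?xs (Delta a)"
    unfolding tensor2_eq_def
  proof (intro allI impI)
    fix \<beta> assume b: "bilinear_form_on scale UNIV \<beta>"
    from D_sigma[OF bil_form[OF b], of c]
    have "scale (sum_list (map (\<lambda>(x, y). \<beta> x y) (Delta a))) (1::'h) = scale (sum_list (map (\<lambda>(x, y). \<beta> x y) ?xs)) 1"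
      unfolding D_def a sum_scale_one[symmetric] by (simp add: o_def case_prod_beta')
    then show "sum_list (map (\<lambda>(x, y). \<beta> x y) ?xs) = sum_list (map (\<lambda>(x, y). \<beta> x y) (Delta a))" by simp
  qed
  moreover have "set ?xs \<subseteq> H1 \<times> H1" by auto
  ultimately show "\<exists>xs. set xs \<subseteq> H1 \<times> H1 \<and> tensor2_eq scale UNIV xs (Delta a)" by blast
qed

lemma eps_sigma: "eps (sigma c) = eps c" by (simp add: sigma_circ eps_circ eps_one)

context
  fixes Delta1 :: "'h \<Rightarrow> ('h \<times> 'h) list"
  assumes D1: "\<forall>a\<in>H1. set (Delta1 a) \<subseteq> H1 \<times> H1 \<and> tensor2_eq scale UNIV (Delta1 a) (Delta a)"
begin

lemma D1_sum: assumes a: "a \<in> H1" and F: "bil F"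
  shows "sum_list (map (\<lambda>(x, y). F x y) (Delta1 a)) = D a F"
proof -
  have t: "tensor2_eq scale UNIV (Delta1 a) (Delta a)" using D1 a by blast
  from teq2[OF t F] show ?thesis by (simp add: D_def)
qed

lemma D1_set: "a \<in> H1 \<Longrightarrow> set (Delta1 a) \<subseteq> H1 \<times> H1" using D1 by blast

lemma D1_mem: "a \<in> H1 \<Longrightarrow> (x, y) \<in> set (Delta1 a) \<Longrightarrow> x \<in> H1 \<and> y \<in> H1" using D1_set by blast

lemma set_concat_sub: "(\<And>p. p \<in> set xs \<Longrightarrow> set (f p) \<subseteq> A) \<Longrightarrow> set (concat (map f xs)) \<subseteq> A"
  by auto

lemma D1_cong: assumes "a \<in> H1" "\<And>x y. x \<in> H1 \<Longrightarrow> y \<in> H1 \<Longrightarrow> F x y = G x y"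
  shows "sum_list (map (\<lambda>(x, y). F x y) (Delta1 a)) = sum_list (map (\<lambda>(x, y). G x y) (Delta1 a))"
proof -
  have "map (\<lambda>(x, y). F x y) (Delta1 a) = map (\<lambda>(x, y). G x y) (Delta1 a)"
    by (rule map_cong[OF refl]) (use D1_set[OF assms(1)] assms(2) in auto)
  then show ?thesis by (rule arg_cong)
qed

lemma h_add: assumes "a \<in> H1" "b \<in> H1" shows "tensor2_eq scale H1 (Delta1 (a + b)) (Delta1 a @ Delta1 b)"
proof (rule proj2)
  show "set (Delta1 (a + b)) \<subseteq> H1 \<times> H1" by (rule D1_set[OF H1_add[OF assms]])
  show "set (Delta1 a @ Delta1 b) \<subseteq> H1 \<times> H1" using D1_set assms by auto
  fix F :: "'h \<Rightarrow> 'h \<Rightarrow> 'h" assume F: "bil F"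
  show "sum_list (map (\<lambda>(x, y). F x y) (Delta1 (a + b))) = sum_list (map (\<lambda>(x, y). F x y) (Delta1 a @ Delta1 b))"
    using D1_sum[OF H1_add[OF assms] F] D1_sum[OF assms(1) F] D1_sum[OF assms(2) F] D_add[OF F] by simp
qed

lemma h_scale: assumes "a \<in> H1"
  shows "tensor2_eq scale H1 (Delta1 (scale k a)) (map (\<lambda>(x, y). (scale k x, y)) (Delta1 a))"
proof (rule proj2)
  show "set (Delta1 (scale k a)) \<subseteq> H1 \<times> H1" by (rule D1_set[OF H1_scale[OF assms]])
  show "set (map (\<lambda>(x, y). (scale k x, y)) (Delta1 a)) \<subseteq> H1 \<times> H1" using D1_set[OF assms] H1_scale by auto
  fix F :: "'h \<Rightarrow> 'h \<Rightarrow> 'h" assume F: "bil F"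
  have "sum_list (map (\<lambda>(x, y). F x y) (map (\<lambda>(x, y). (scale k x, y)) (Delta1 a)))
      = sum_list (map (\<lambda>(x, y). scale k (F x y)) (Delta1 a))"
    using F by (simp add: o_def case_prod_beta' bil_def lin_def)
  also have "\<dots> = scale k (D a F)" by (simp add: D1_sum[OF assms F, symmetric] scale_sum_list case_prod_beta')
  also have "\<dots> = sum_list (map (\<lambda>(x, y). F x y) (Delta1 (scale k a)))"
    using D1_sum[OF H1_scale[OF assms] F] D_scale[OF F] by simp
  finally show "sum_list (map (\<lambda>(x, y). F x y) (Delta1 (scale k a))) = sum_list (map (\<lambda>(x, y). F x y) (map (\<lambda>(x, y). (scale k x, y)) (Delta1 a)))" by simp
qed

lemma h_coassoc: assumes a: "a \<in> H1"
  shows "tensor3_eq scale H1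
        (concat (map (\<lambda>(x, y). map (\<lambda>(u, v). (u, v, y)) (Delta1 x)) (Delta1 a)))
        (concat (map (\<lambda>(x, y). map (\<lambda>(u, v). (x, u, v)) (Delta1 y)) (Delta1 a)))"
proof (rule proj3)
  show "set (concat (map (\<lambda>(x, y). map (\<lambda>(u, v). (u, v, y)) (Delta1 x)) (Delta1 a))) \<subseteq> H1 \<times> H1 \<times> H1"
  proof (rule set_concat_sub)
    fix p assume p: "p \<in> set (Delta1 a)"
    obtain x y where xy: "p = (x, y)" by (cases p)
    have "x \<in> H1" "y \<in> H1" using D1_mem[OF a] p xy by auto
    moreover have "set (Delta1 x) \<subseteq> H1 \<times> H1" by (rule D1_set) fact
    ultimately have "set (map (\<lambda>(u, v). (u, v, y)) (Delta1 x)) \<subseteq> H1 \<times> H1 \<times> H1" by auto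
    then show "set ((\<lambda>(x, y). map (\<lambda>(u, v). (u, v, y)) (Delta1 x)) p) \<subseteq> H1 \<times> H1 \<times> H1"
      by (simp add: xy)
  qed
  show "set (concat (map (\<lambda>(x, y). map (\<lambda>(u, v). (x, u, v)) (Delta1 y)) (Delta1 a))) \<subseteq> H1 \<times> H1 \<times> H1"
  proof (rule set_concat_sub)
    fix p assume p: "p \<in> set (Delta1 a)"
    obtain x y where xy: "p = (x, y)" by (cases p)
    have "x \<in> H1" "y \<in> H1" using D1_mem[OF a] p xy by auto
    moreover have "set (Delta1 y) \<subseteq> H1 \<times> H1" by (rule D1_set) fact
    ultimately have "set (map (\<lambda>(u, v). (x, u, v)) (Delta1 y)) \<subseteq> H1 \<times> H1 \<times> H1" by auto
    then show "set ((\<lambda>(x, y). map (\<lambda>(u, v). (x, u, v)) (Delta1 y)) p) \<subseteq> H1 \<times> H1 \<times> H1"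
      by (simp add: xy)
  qed
  fix G :: "'h \<Rightarrow> 'h \<Rightarrow> 'h \<Rightarrow> 'h" assume G: "tril G"
  have G1: "lin (\<lambda>x. G x y z)" "lin (\<lambda>y. G x y z)" "lin (\<lambda>z. G x y z)" for x y z
    using G by (auto simp: tril_def)
  have "sum_list (map (\<lambda>(x, y, z). G x y z) (concat (map (\<lambda>(x, y). map (\<lambda>(u, v). (u, v, y)) (Delta1 x)) (Delta1 a))))
      = sum_list (map (\<lambda>(x, y). sum_list (map (\<lambda>(u, v). G u v y) (Delta1 x))) (Delta1 a))"
    by (simp add: sum_list_concat_map o_def case_prod_beta')
  also have "\<dots> = sum_list (map (\<lambda>(x, y). D x (\<lambda>u v. G u v y)) (Delta1 a))"
    by (rule D1_cong[OF a], rule D1_sum, assumption) (intro bilI G1)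
  also have "\<dots> = D a (\<lambda>x y. D x (\<lambda>u v. G u v y))"
    by (rule D1_sum[OF a]) (intro lin_rules G1)
  also have "\<dots> = D a (\<lambda>x y. D y (\<lambda>u v. G x u v))" by (rule D_coassoc[OF G])
  also have "\<dots> = sum_list (map (\<lambda>(x, y). D y (\<lambda>u v. G x u v)) (Delta1 a))"
    by (rule D1_sum[OF a, symmetric]) (intro lin_rules G1)
  also have "\<dots> = sum_list (map (\<lambda>(x, y). sum_list (map (\<lambda>(u, v). G x u v) (Delta1 y))) (Delta1 a))"
    by (rule D1_cong[OF a], rule D1_sum[symmetric], assumption) (intro bilI G1)
  also have "\<dots> = sum_list (map (\<lambda>(x, y, z). G x y z) (concat (map (\<lambda>(x, y). map (\<lambda>(u, v). (x, u, v)) (Delta1 y)) (Delta1 a))))"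
    by (simp add: sum_list_concat_map o_def case_prod_beta')
  finally show "sum_list (map (\<lambda>(x, y, z). G x y z) (concat (map (\<lambda>(x, y). map (\<lambda>(u, v). (u, v, y)) (Delta1 x)) (Delta1 a))))
      = sum_list (map (\<lambda>(x, y, z). G x y z) (concat (map (\<lambda>(x, y). map (\<lambda>(u, v). (x, u, v)) (Delta1 y)) (Delta1 a))))" .
qed


lemma h_mult: assumes a: "a \<in> H1" and b: "b \<in> H1"
  shows "tensor2_eq scale H1 (Delta1 (circ a b))
        (concat (map (\<lambda>(x, y). map (\<lambda>(u, v). (circ x u, circ y v)) (Delta1 b)) (Delta1 a)))"
proof (rule proj2)
  show "set (Delta1 (circ a b)) \<subseteq> H1 \<times> H1" by (rule D1_set[OF H1_circ[OF a b]])
  show "set (concat (map (\<lambda>(x, y). map (\<lambda>(u, v). (circ x u, circ y v)) (Delta1 b)) (Delta1 a))) \<subseteq> H1 \<times> H1"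
  proof (rule set_concat_sub)
    fix p assume p: "p \<in> set (Delta1 a)"
    obtain x y where xy: "p = (x, y)" by (cases p)
    have xy1: "x \<in> H1" "y \<in> H1" using D1_mem[OF a] p xy by auto
    have "set (Delta1 b) \<subseteq> H1 \<times> H1" by (rule D1_set) fact
    then have "set (map (\<lambda>(u, v). (circ x u, circ y v)) (Delta1 b)) \<subseteq> H1 \<times> H1"
      using xy1 H1_circ by auto
    then show "set ((\<lambda>(x, y). map (\<lambda>(u, v). (circ x u, circ y v)) (Delta1 b)) p) \<subseteq> H1 \<times> H1"
      by (simp add: xy)
  qed
  fix F :: "'h \<Rightarrow> 'h \<Rightarrow> 'h" assume F: "bil F"
  note FL = lin_bilL[OF F] and FR = lin_bilR[OF F]
  have "sum_list (map (\<lambda>(x, y). F x y) (concat (map (\<lambda>(x, y). map (\<lambda>(u, v). (circ x u, circ y v)) (Delta1 b)) (Delta1 a))))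
      = sum_list (map (\<lambda>(x, y). sum_list (map (\<lambda>(u, v). F (circ x u) (circ y v)) (Delta1 b))) (Delta1 a))"
    by (simp add: sum_list_concat_map o_def case_prod_beta')
  also have "\<dots> = sum_list (map (\<lambda>(x, y). D b (\<lambda>u v. F (circ x u) (circ y v))) (Delta1 a))"
    by (rule D1_cong[OF a], rule D1_sum[OF b]) (intro lin_rules2 FL FR)
  also have "\<dots> = D a (\<lambda>x y. D b (\<lambda>u v. F (circ x u) (circ y v)))"
    by (rule D1_sum[OF a]) (intro lin_rules2 FL FR)
  also have "\<dots> = D (circ a b) F" by (rule D_circ[OF F, symmetric])
  also have "\<dots> = sum_list (map (\<lambda>(x, y). F x y) (Delta1 (circ a b)))"
    by (rule D1_sum[OF H1_circ[OF a b] F, symmetric])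
  finally show "sum_list (map (\<lambda>(x, y). F x y) (Delta1 (circ a b))) =
    sum_list (map (\<lambda>(x, y). F x y) (concat (map (\<lambda>(x, y). map (\<lambda>(u, v). (circ x u, circ y v)) (Delta1 b)) (Delta1 a))))"
    by simp
qed

lemma h_one: "tensor2_eq scale H1 (Delta1 1) [(1, 1)]"
proof (rule proj2)
  show "set (Delta1 1) \<subseteq> H1 \<times> H1" by (rule D1_set[OF H1_one])
  show "set [(1::'h, 1::'h)] \<subseteq> H1 \<times> H1" using H1_one by auto
  fix F :: "'h \<Rightarrow> 'h \<Rightarrow> 'h" assume F: "bil F"
  show "sum_list (map (\<lambda>(x, y). F x y) (Delta1 1)) = sum_list (map (\<lambda>(x, y). F x y) [(1, 1)])"
    using D1_sum[OF H1_one F] D_one[OF F] by simp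
qed

lemma h_counit: assumes a: "a \<in> H1"
  shows "sum_list (map (\<lambda>(x, y). scale (eps x) y) (Delta1 a)) = a"
    and "sum_list (map (\<lambda>(x, y). scale (eps y) x) (Delta1 a)) = a"
proof -
  have "sum_list (map (\<lambda>(x, y). scale (eps x) y) (Delta1 a)) = D a (\<lambda>x y. scale (eps x) y)"
    by (rule D1_sum[OF a]) (intro lin_rules)
  then show "sum_list (map (\<lambda>(x, y). scale (eps x) y) (Delta1 a)) = a" by (simp add: D_counitL)
  have "sum_list (map (\<lambda>(x, y). scale (eps y) x) (Delta1 a)) = D a (\<lambda>x y. scale (eps y) x)"
    by (rule D1_sum[OF a]) (intro lin_rules)
  then show "sum_list (map (\<lambda>(x, y). scale (eps y) x) (Delta1 a)) = a" by (simp add: D_counitR)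
qed

lemma h_anti: assumes a: "a \<in> H1"
  shows "sum_list (map (\<lambda>(x, y). circ (T x) y) (Delta1 a)) = scale (eps a) 1"
    and "sum_list (map (\<lambda>(x, y). circ x (T y)) (Delta1 a)) = scale (eps a) 1"
proof -
  obtain c where c: "a = sigma c" using a by blast
  have "sum_list (map (\<lambda>(x, y). circ (T x) y) (Delta1 a)) = D a (\<lambda>x y. circ (T x) y)"
    by (rule D1_sum[OF a]) (intro lin_rules2)
  also have "\<dots> = D c (\<lambda>x y. circ (T (sigma x)) (sigma y))"
    unfolding c by (rule D_sigma) (intro lin_rules2)
  also have "\<dots> = scale (eps a) 1" by (simp add: T_sigma TC c eps_sigma)
  finally show "sum_list (map (\<lambda>(x, y). circ (T x) y) (Delta1 a)) = scale (eps a) 1" .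
  have "sum_list (map (\<lambda>(x, y). circ x (T y)) (Delta1 a)) = D a (\<lambda>x y. circ x (T y))"
    by (rule D1_sum[OF a]) (intro lin_rules2)
  also have "\<dots> = D c (\<lambda>x y. circ (sigma x) (T (sigma y)))"
    unfolding c by (rule D_sigma) (intro lin_rules2)
  also have "\<dots> = scale (eps a) 1" by (simp add: T_sigma circ_sigma CT c eps_sigma)
  finally show "sum_list (map (\<lambda>(x, y). circ x (T y)) (Delta1 a)) = scale (eps a) 1" .
qed

lemma h_cocomm: assumes a: "a \<in> H1"
  shows "tensor2_eq scale H1 (Delta1 a) (map (\<lambda>(x, y). (y, x)) (Delta1 a))"
proof (rule proj2)
  show "set (Delta1 a) \<subseteq> H1 \<times> H1" by (rule D1_set[OF a])
  then show "set (map (\<lambda>(x, y). (y, x)) (Delta1 a)) \<subseteq> H1 \<times> H1" by auto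
  fix F :: "'h \<Rightarrow> 'h \<Rightarrow> 'h" assume F: "bil F"
  have F': "bil (\<lambda>x y. F y x)" using F by (simp add: bil_def)
  show "sum_list (map (\<lambda>(x, y). F x y) (Delta1 a)) = sum_list (map (\<lambda>(x, y). F x y) (map (\<lambda>(x, y). (y, x)) (Delta1 a)))"
    using D1_sum[OF a F] D1_sum[OF a F'] D_cocomm[OF F, of a] by (simp add: o_def case_prod_beta')
qed

lemma hopf_H1: "hopf_algebra_on scale H1 circ 1 Delta1 eps T"
  unfolding hopf_algebra_on_def
proof (intro conjI ballI allI)
  show "subspace_on scale H1" unfolding subspace_on_def using H1_zero H1_add H1_scale by blast
  show "1 \<in> H1" by (rule H1_one)
  show "linear_functional_on scale H1 eps" by (simp add: linear_functional_on_def eps_add eps_scale)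
  show "linear_map_on scale H1 T" using lin_T H1_T by (simp add: linear_map_on_def lin_def)
  show "tensor2_eq scale H1 (Delta1 1) [(1, 1)]" by (rule h_one)
  show "eps 1 = 1" by (rule eps_one)
  fix a assume a: "a \<in> H1"
  show "set (Delta1 a) \<subseteq> H1 \<times> H1" by (rule D1_set[OF a])
  show "circ 1 a = a" by (rule circ_one_left)
  show "circ a 1 = a" using a by (simp add: sigma_circ[symmetric] H1_iff)
  show "sum_list (map (\<lambda>(x, y). scale (eps x) y) (Delta1 a)) = a" by (rule h_counit(1)[OF a])
  show "sum_list (map (\<lambda>(x, y). scale (eps y) x) (Delta1 a)) = a" by (rule h_counit(2)[OF a])
  show "sum_list (map (\<lambda>(x, y). circ (T x) y) (Delta1 a)) = scale (eps a) 1" by (rule h_anti(1)[OF a])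
  show "sum_list (map (\<lambda>(x, y). circ x (T y)) (Delta1 a)) = scale (eps a) 1" by (rule h_anti(2)[OF a])
  show "tensor3_eq scale H1
        (concat (map (\<lambda>(x, y). map (\<lambda>(u, v). (u, v, y)) (Delta1 x)) (Delta1 a)))
        (concat (map (\<lambda>(x, y). map (\<lambda>(u, v). (x, u, v)) (Delta1 y)) (Delta1 a)))" by (rule h_coassoc[OF a])
  fix k
  show "tensor2_eq scale H1 (Delta1 (scale k a)) (map (\<lambda>(x, y). (scale k x, y)) (Delta1 a))" by (rule h_scale[OF a])
  fix b assume b: "b \<in> H1"
  show "circ a b \<in> H1" by (rule H1_circ[OF a b])
  show "tensor2_eq scale H1 (Delta1 (a + b)) (Delta1 a @ Delta1 b)" by (rule h_add[OF a b])
  show "tensor2_eq scale H1 (Delta1 (circ a b)) (concat (map (\<lambda>(x, y). map (\<lambda>(u, v). (circ x u, circ y v)) (Delta1 b)) (Delta1 a)))"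
    by (rule h_mult[OF a b])
  show "eps (circ a b) = eps a * eps b" by (rule eps_circ)
  show "circ (scale k a) b = scale k (circ a b)" using lin_circ1[OF lin_id, of b] by (simp add: lin_def)
  show "circ a (scale k b) = scale k (circ a b)" using lin_circ2[OF lin_id, of a] by (simp add: lin_def)
  fix c assume c: "c \<in> H1"
  show "circ (a + b) c = circ a c + circ b c" using lin_circ1[OF lin_id, of c] by (simp add: lin_def)
  show "circ a (b + c) = circ a b + circ a c" using lin_circ2[OF lin_id, of a] by (simp add: lin_def)
  show "circ (circ a b) c = circ a (circ b c)" by (rule circ_assoc)
qed

lemma cocomm_H1: "cocommutative_on scale H1 Delta1"
  unfolding cocommutative_on_def using h_cocomm by blast

end

end

theorem mainTheorem1:
  fixes scale :: "'k::field_char_0 \<Rightarrow> 'h::ring_1 \<Rightarrow> 'h"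
    and Delta :: "'h \<Rightarrow> ('h \<times> 'h) list" and eps :: "'h \<Rightarrow> 'k"
    and S B1 B2 :: "'h \<Rightarrow> 'h"
  assumes "rota_baxter_system scale Delta eps S B1 B2"
  defines "H1 \<equiv> range (cocycle Delta S B1 B2)"
  shows "(\<forall>a\<in>H1. \<exists>xs. set xs \<subseteq> H1 \<times> H1 \<and> tensor2_eq scale UNIV xs (Delta a)) \<and>
         (\<forall>Delta1. (\<forall>a\<in>H1. set (Delta1 a) \<subseteq> H1 \<times> H1 \<and> tensor2_eq scale UNIV (Delta1 a) (Delta a)) \<longrightarrow>
            hopf_algebra_on scale H1 (descendent Delta S B1 B2) 1 Delta1 eps (rbs_T Delta S B1 B2) \<and>
            cocommutative_on scale H1 Delta1)"
proof -
  interpret r: rbs scale Delta eps S B1 B2 using assms(1) by (simp add: rbs_def)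
  have H: "H1 = range r.sigma" unfolding H1_def r.sigma_eq ..
  show ?thesis unfolding H r.circ_eq[symmetric] r.T_eq[symmetric]
    using r.first_part r.hopf_H1 r.cocomm_H1 by blast
qed

end
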